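(* Let $(\mathbf{v}_i)_{i\ge1}$ be $[0,1]$-valued random variables that are conditionally i.i.d. given $\boldsymbol{\nu}$ with law $\boldsymbol{\nu}$, where $\boldsymbol{\nu}$ is a species sampling process on $[0,1]$ with base measure $\nu_0$ and EPPF $\pi_\nu$. Let $\mathbf{W}=(\mathbf{w}_j)_{j\ge1}$ with $\mathbf{w}_1=\mathbf{v}_1$, $\mathbf{w}_j=\mathbf{v}_j\prod_{i<j}(1-\mathbf{v}_i)$, and let $(\mathbf{d}_i)_{i\ge1}$ be conditionally i.i.d. given $\mathbf{W}$ with $\mathbb{P}[\mathbf{d}_i=j\mid\mathbf{W}]=\mathbf{w}_j$. Then for every $n\ge1$ and $d_1,\dots,d_n\in\mathbb{N}$, $$\mathbb{P}[\mathbf{d}_1=d_1,\dots,\mathbf{d}_n=d_n]=\sum_{\{A_1,\dots,A_m\}}\pi_\nu(|A_1|,\dots,|A_m|)\prod_{j=1}^m\int_{[0,1]}v^{\sum_{i\in A_j}r_i}(1-v)^{\sum_{i\in A_j}t_i}\,\nu_0(dv),$$ where $r_i=\sum_{l=1}^n\mathbf{1}_{\{d_l=i\}}$, $t_i=\sum_{l=1}^n\mathbf{1}_{\{d_l>i\}}$, and the sum ranges over all partitions $\{A_1,\dots,A_m\}$ of $\{1,\dots,k\}$ with $k=\max\{d_1,\dots,d_n\}$.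
   Context: A species sampling process on $[0,1]$ with diffuse base measure $\nu_0$ is a random probability measure $\boldsymbol{\nu}=\sum_{j\ge1}\mathbf{p}_j\delta_{\boldsymbol{\eta}_j}+(1-\sum_j\mathbf{p}_j)\nu_0$ with $\mathbf{p}_j\ge0$, $\sum_j\mathbf{p}_j\le1$ a.s., independent of i.i.d. atoms $\boldsymbol{\eta}_j\sim\nu_0$. Its EPPF is the symmetric function $\pi_\nu$ such that, for $(\mathbf{v}_i)$ conditionally i.i.d. from $\boldsymbol{\nu}$, the random partition of $\{1,\dots,k\}$ induced by ties among $\mathbf{v}_1,\dots,\mathbf{v}_k$ equals a given partition $\{A_1,\dots,A_m\}$ with probability $\pi_\nu(|A_1|,\dots,|A_m|)$. *)

theory Defs
  imports "HOL-Probability.Probability" "HOL-Library.Disjoint_Sets" "HOL-Library.Multiset"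
begin

definition U01 :: "real measure" where
  "U01 = restrict_space borel {0..1}"

definition diffuse_base :: "real measure \<Rightarrow> bool" where
  "diffuse_base \<nu>0 \<longleftrightarrow> \<nu>0 \<in> space (prob_algebra U01) \<and> (\<forall>x. emeasure \<nu>0 {x} = 0)"

definition species_sampling ::
  "'a measure \<Rightarrow> real measure \<Rightarrow> (nat \<Rightarrow> 'a \<Rightarrow> real) \<Rightarrow> (nat \<Rightarrow> 'a \<Rightarrow> real) \<Rightarrow> ('a \<Rightarrow> real measure) \<Rightarrow> bool"
  where
  "species_sampling M \<nu>0 p \<eta> \<nu> \<longleftrightarrow>
     (\<forall>j. p j \<in> borel_measurable M) \<and>
     (\<forall>j. \<eta> j \<in> M \<rightarrow>\<^sub>M U01) \<and>
     prob_space.indep_vars M (\<lambda>_. U01) \<eta> UNIV \<and>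
     (\<forall>j. distr M U01 (\<eta> j) = \<nu>0) \<and>
     prob_space.indep_var M (Pi\<^sub>M UNIV (\<lambda>_. borel)) (\<lambda>\<omega> j. p j \<omega>)
                            (Pi\<^sub>M UNIV (\<lambda>_. U01)) (\<lambda>\<omega> j. \<eta> j \<omega>) \<and>
     (AE \<omega> in M. (\<forall>j. 0 \<le> p j \<omega>) \<and> summable (\<lambda>j. p j \<omega>) \<and> (\<Sum>j. p j \<omega>) \<le> 1) \<and>
     \<nu> \<in> M \<rightarrow>\<^sub>M prob_algebra U01 \<and>
     (AE \<omega> in M. \<forall>B\<in>sets U01.
        measure (\<nu> \<omega>) B = (\<Sum>j. p j \<omega> * indicator B (\<eta> j \<omega>)) + (1 - (\<Sum>j. p j \<omega>)) * measure \<nu>0 B)"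

definition cond_iid_given_measure ::
  "'a measure \<Rightarrow> ('a \<Rightarrow> real measure) \<Rightarrow> (nat \<Rightarrow> 'a \<Rightarrow> real) \<Rightarrow> bool" where
  "cond_iid_given_measure M \<nu> v \<longleftrightarrow>
     (\<forall>i\<ge>1. v i \<in> M \<rightarrow>\<^sub>M U01) \<and>
     (\<forall>n A B. A \<in> sets (vimage_algebra (space M) \<nu> (prob_algebra U01)) \<longrightarrow> (\<forall>i. B i \<in> sets U01) \<longrightarrow>
        measure M (A \<inter> {\<omega>\<in>space M. \<forall>i\<in>{1..n}. v i \<omega> \<in> B i})
        = (\<integral>\<omega>. indicator A \<omega> * (\<Prod>i\<in>{1..n}. measure (\<nu> \<omega>) (B i)) \<partial>M))"

text \<open>Stick-breaking weights w_1 = v_1, w_j = v_j prod_{i<j} (1 - v_i), indexed from 1 (w_0 = 0).\<close>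
definition stick_weights :: "(nat \<Rightarrow> 'a \<Rightarrow> real) \<Rightarrow> 'a \<Rightarrow> nat \<Rightarrow> real" where
  "stick_weights v \<omega> j = (if j = 0 then 0 else v j \<omega> * (\<Prod>i\<in>{1..<j}. (1 - v i \<omega>)))"

definition cond_iid_given_weights ::
  "'a measure \<Rightarrow> ('a \<Rightarrow> nat \<Rightarrow> real) \<Rightarrow> (nat \<Rightarrow> 'a \<Rightarrow> nat) \<Rightarrow> bool" where
  "cond_iid_given_weights M W d \<longleftrightarrow>
     (\<forall>i\<ge>1. d i \<in> M \<rightarrow>\<^sub>M count_space UNIV) \<and>
     (\<forall>n A (j :: nat \<Rightarrow> nat). A \<in> sets (vimage_algebra (space M) W (Pi\<^sub>M UNIV (\<lambda>_. borel))) \<longrightarrow>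
        measure M (A \<inter> {\<omega>\<in>space M. \<forall>i\<in>{1..n}. d i \<omega> = j i})
        = (\<integral>\<omega>. indicator A \<omega> * (\<Prod>i\<in>{1..n}. W \<omega> (j i)) \<partial>M))"

text \<open>pi is the EPPF (a symmetric function of the block sizes, encoded on multisets) of the
  random partition induced by ties among v_1, ..., v_k.\<close>
definition is_EPPF :: "'a measure \<Rightarrow> (nat \<Rightarrow> 'a \<Rightarrow> real) \<Rightarrow> (nat multiset \<Rightarrow> real) \<Rightarrow> bool" where
  "is_EPPF M v \<pi> \<longleftrightarrow>
     (\<forall>k\<ge>1. \<forall>P. partition_on {1..k} P \<longrightarrow>
        measure M {\<omega>\<in>space M. \<forall>i\<in>{1..k}. \<forall>j\<in>{1..k}.
                      (v i \<omega> = v j \<omega>) \<longleftrightarrow> (\<exists>A\<in>P. i \<in> A \<and> j \<in> A)}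
        = \<pi> (image_mset card (mset_set P)))"

end

theory Submission
  imports Defs
begin

lemma measurable_PiM_kernel:
  assumes I: "finite I"
    and Kp: "\<And>i x. x \<in> space N \<Longrightarrow> prob_space (K i x)"
    and Ks: "\<And>i x. x \<in> space N \<Longrightarrow> sets (K i x) = sets (Mi i)"
    and Km: "\<And>i A. i \<in> I \<Longrightarrow> A \<in> sets (Mi i) \<Longrightarrow> (\<lambda>x. emeasure (K i x) A) \<in> borel_measurable N"
  shows "(\<lambda>x. PiM I (\<lambda>i. K i x)) \<in> N \<rightarrow>\<^sub>M prob_algebra (PiM I Mi)"
proof (rule measurable_prob_algebra_generated[OF sets_PiM Int_stable_prod_algebra prod_algebra_sets_into_space])
  fix x assume x: "x \<in> space N"
  show "prob_space (PiM I (\<lambda>i. K i x))" by (rule prob_space_PiM) (use Kp x in auto)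
  show "sets (PiM I (\<lambda>i. K i x)) = sets (PiM I Mi)" by (rule sets_PiM_cong) (use Ks x in auto)
next
  fix A assume "A \<in> prod_algebra I Mi"
  then obtain E where A: "A = Pi\<^sub>E I E" and E: "E \<in> (\<Pi> i\<in>I. sets (Mi i))"
    by (rule prod_algebraE_all)
  have "(\<lambda>x. \<Prod>i\<in>I. emeasure (K i x) (E i)) \<in> borel_measurable N"
    using E Km by (intro borel_measurable_prod_ennreal) auto
  moreover have "x \<in> space N \<Longrightarrow> emeasure (PiM I (\<lambda>i. K i x)) A = (\<Prod>i\<in>I. emeasure (K i x) (E i))" for x
  proof -
    assume x: "x \<in> space N"
    interpret product_prob_space "\<lambda>i. K i x" using Kp x by (auto simp: product_prob_space_def product_prob_space_axioms_def product_sigma_finite_def prob_space_imp_sigma_finite)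
    show ?thesis unfolding A using E Ks x I by (intro emeasure_PiM) auto
  qed
  ultimately show "(\<lambda>x. emeasure (PiM I (\<lambda>i. K i x)) A) \<in> borel_measurable N"
    by (simp cong: measurable_cong)
qed

lemma PiM_bind_discrete:
  fixes \<kappa> :: "nat \<Rightarrow> 'b measure" and wt :: "nat \<Rightarrow> ennreal"
  assumes I: "finite I"
    and \<kappa>p: "\<And>c. prob_space (\<kappa> c)" and \<kappa>s: "\<And>c. sets (\<kappa> c) = sets N"
    and W: "prob_space (density (count_space UNIV) wt)"
  shows "PiM I (\<lambda>_. bind (density (count_space UNIV) wt) \<kappa>)
    = bind (density (count_space (PiE I (\<lambda>_. UNIV))) (\<lambda>\<sigma>. \<Prod>i\<in>I. wt (\<sigma> i))) (\<lambda>\<sigma>. PiM I (\<lambda>i. \<kappa> (\<sigma> i)))"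
proof -
  define W where "W = density (count_space UNIV) wt"
  have \<kappa>m: "\<kappa> \<in> W \<rightarrow>\<^sub>M prob_algebra N"
    unfolding W_def
    by (subst measurable_cong_sets[OF sets_density refl]) 
       (auto simp: measurable_count_space_eq1 space_prob_algebra \<kappa>p \<kappa>s)
  have Wsp: "W \<in> space (prob_algebra (count_space UNIV))"
    using W by (auto simp: W_def space_prob_algebra)
  define \<mu> where "\<mu> = bind W \<kappa>"
  have \<mu>p: "prob_space \<mu>" unfolding \<mu>_def by (rule prob_space_bind'[OF Wsp]) 
     (use \<kappa>m in \<open>simp add: W_def measurable_cong_sets[OF sets_density refl]\<close>)
  have \<mu>s: "sets \<mu> = sets N" unfolding \<mu>_def by (rule sets_bind') (use Wsp \<kappa>m in \<open>auto simp: W_def measurable_cong_sets[OF sets_density refl]\<close>)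
  interpret P: product_prob_space "\<lambda>_. \<mu>"
    using \<mu>p by (auto simp: product_prob_space_def product_prob_space_axioms_def product_sigma_finite_def prob_space_imp_sigma_finite)
  define S where "S = PiE I (\<lambda>_::'a. UNIV::nat set)"
  define D where "D = density (count_space S) (\<lambda>\<sigma>. \<Prod>i\<in>I. wt (\<sigma> i))"
  define K where "K = (\<lambda>\<sigma>. PiM I (\<lambda>i. \<kappa> (\<sigma> i)))"
  have Kp: "prob_space (K \<sigma>)" for \<sigma> unfolding K_def by (rule prob_space_PiM) (use \<kappa>p in auto)
  have Ks: "sets (K \<sigma>) = sets (PiM I (\<lambda>_. N))" for \<sigma> unfolding K_def by (rule sets_PiM_cong) (use \<kappa>s in auto)
  have Km: "K \<in> D \<rightarrow>\<^sub>M subprob_algebra (PiM I (\<lambda>_. N))"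
    unfolding D_def
    by (subst measurable_cong_sets[OF sets_density refl])
       (auto simp: measurable_count_space_eq1 space_subprob_algebra Kp Ks prob_space_imp_subprob_space)
  have Dne: "space D \<noteq> {}" by (auto simp: D_def S_def)
  have "bind D K = PiM I (\<lambda>_. \<mu>)"
  proof (rule P.PiM_eqI[OF I])
    show "sets (bind D K) = sets (PiM I (\<lambda>_. \<mu>))"
      using Ks Dne by (subst sets_bind) (auto intro!: sets_PiM_cong simp: \<mu>s)
  next
    fix A assume A: "\<And>i. i \<in> I \<Longrightarrow> A i \<in> sets \<mu>"
    have "emeasure (bind D K) (Pi\<^sub>E I A) = (\<integral>\<^sup>+\<sigma>. emeasure (K \<sigma>) (Pi\<^sub>E I A) \<partial>D)"
      using A Km Dne by (intro emeasure_bind) (auto intro!: sets_PiM_I_finite simp: I \<mu>s)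
    also have "\<dots> = (\<integral>\<^sup>+\<sigma>. (\<Prod>i\<in>I. wt (\<sigma> i)) * emeasure (K \<sigma>) (Pi\<^sub>E I A) \<partial>count_space S)"
      unfolding D_def by (rule nn_integral_density) auto
    also have "\<dots> = (\<integral>\<^sup>+\<sigma>. (\<Prod>i\<in>I. wt (\<sigma> i) * emeasure (\<kappa> (\<sigma> i)) (A i)) \<partial>count_space S)"
    proof (rule nn_integral_cong)
      fix \<sigma> 
      interpret Q: product_prob_space "\<lambda>i. \<kappa> (\<sigma> i)"
        using \<kappa>p by (auto simp: product_prob_space_def product_prob_space_axioms_def product_sigma_finite_def prob_space_imp_sigma_finite)
      show "(\<Prod>i\<in>I. wt (\<sigma> i)) * emeasure (K \<sigma>) (Pi\<^sub>E I A) = (\<Prod>i\<in>I. wt (\<sigma> i) * emeasure (\<kappa> (\<sigma> i)) (A i))"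
        unfolding K_def using A I by (subst Q.emeasure_PiM) (auto simp: \<kappa>s \<mu>s prod.distrib)
    qed
    also have "\<dots> = (\<integral>\<^sup>+\<sigma>. (\<Prod>i\<in>I. wt (\<sigma> i) * emeasure (\<kappa> (\<sigma> i)) (A i)) \<partial>PiM I (\<lambda>_. count_space UNIV))"
      unfolding S_def by (subst count_space_PiM_finite) (auto simp: I)
    also have "\<dots> = (\<Prod>i\<in>I. \<integral>\<^sup>+c. wt c * emeasure (\<kappa> c) (A i) \<partial>count_space UNIV)"
    proof -
      interpret C: product_sigma_finite "\<lambda>_::'a. count_space (UNIV::nat set)"
        by (auto simp: product_sigma_finite_def sigma_finite_measure_count_space)
      show ?thesis by (rule C.product_nn_integral_prod) (auto simp: I)
    qed
    also have "\<dots> = (\<Prod>i\<in>I. emeasure \<mu> (A i))"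
    proof (rule prod.cong[OF refl])
      fix i assume "i \<in> I"
      have "emeasure \<mu> (A i) = (\<integral>\<^sup>+c. emeasure (\<kappa> c) (A i) \<partial>W)"
        unfolding \<mu>_def using A[OF \<open>i\<in>I\<close>] 
        by (intro emeasure_bind) (auto simp: W_def \<mu>s measurable_count_space_eq1 space_subprob_algebra \<kappa>p \<kappa>s prob_space_imp_subprob_space)
      also have "\<dots> = (\<integral>\<^sup>+c. wt c * emeasure (\<kappa> c) (A i) \<partial>count_space UNIV)"
        unfolding W_def by (rule nn_integral_density) auto
      finally show "(\<integral>\<^sup>+c. wt c * emeasure (\<kappa> c) (A i) \<partial>count_space UNIV) = emeasure \<mu> (A i)" ..
    qed
    finally show "emeasure (bind D K) (Pi\<^sub>E I A) = (\<Prod>i\<in>I. emeasure \<mu> (A i))" .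
  qed
  then show ?thesis by (simp add: \<mu>_def W_def D_def K_def S_def)
qed

lemma space_U01[simp]: "space U01 = {0..1}"
  by (simp add: U01_def)

lemma AE_PiM_diffuse_neq:
  fixes L :: "'i \<Rightarrow> real measure"
  assumes "product_prob_space L" and I: "finite I" "i \<in> I" "i' \<in> I" "i \<noteq> i'"
    and Ls: "\<And>l. sets (L l) = sets U01"
    and dif: "\<And>y. emeasure (L i) {y} = 0"
  shows "AE x in PiM I L. x i \<noteq> x i'"
proof -
  interpret product_prob_space L by fact
  define J where "J = I - {i}"
  have IJ: "I = insert i J" "i \<notin> J" "finite J" "i' \<in> J" using I by (auto simp: J_def)
  have comp: "(\<lambda>x. x l) \<in> borel_measurable (PiM I L)" if "l \<in> I" for l
  proof -
    have "(\<lambda>x. x l) \<in> PiM I L \<rightarrow>\<^sub>M L l" using that by simp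
    moreover have "(\<lambda>x. x) \<in> L l \<rightarrow>\<^sub>M borel"
      by (subst measurable_cong_sets[OF Ls refl]) (simp add: U01_def measurable_restrict_space1)
    ultimately show ?thesis using measurable_compose by fastforce
  qed
  define N where "N = {x\<in>space (PiM I L). x i = x i'}"
  have Nm: "N \<in> sets (PiM I L)" unfolding N_def using comp I by measurable
  have "emeasure (PiM I L) N = (\<integral>\<^sup>+x. indicator N x \<partial>PiM I L)" using Nm by simp
  also have "\<dots> = (\<integral>\<^sup>+x. \<integral>\<^sup>+y. indicator N (x(i := y)) \<partial>L i \<partial>PiM J L)"
    unfolding IJ(1) by (rule product_nn_integral_insert) (use IJ Nm in \<open>auto simp: IJ(1)[symmetric]\<close>)
  also have "\<dots> = (\<integral>\<^sup>+x. 0 \<partial>PiM J L)"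
  proof (rule nn_integral_cong)
    fix x assume x: "x \<in> space (PiM J L)"
    have xi': "x i' \<in> {0..1}" using x IJ sets_eq_imp_space_eq[OF Ls[of i']] by (auto simp: space_PiM)
    have "(\<integral>\<^sup>+y. indicator N (x(i := y)) \<partial>L i) = (\<integral>\<^sup>+y. indicator {x i'} y \<partial>L i)"
    proof (rule nn_integral_cong)
      fix y assume y: "y \<in> space (L i)"
      have "x(i := y) \<in> space (PiM I L)" using x y IJ by (auto simp: space_PiM PiE_def extensional_def)
      then show "indicator N (x(i := y)) = (indicator {x i'} y :: ennreal)"
        using IJ I by (auto simp: N_def indicator_def)
    qed
    also have "\<dots> = emeasure (L i) {x i'}" using xi' by (intro nn_integral_indicator) (simp add: Ls U01_def sets_restrict_space_iff)
    also have "\<dots> = 0" by (rule dif)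
    finally show "(\<integral>\<^sup>+y. indicator N (x(i := y)) \<partial>L i) = 0" .
  qed
  also have "\<dots> = 0" by simp
  finally have "N \<in> null_sets (PiM I L)" using Nm by auto
  then show ?thesis by (rule AE_I') (auto simp: N_def)
qed

lemma joint_law:
  fixes M :: "'a measure" and \<nu> :: "'a \<Rightarrow> real measure" and v :: "nat \<Rightarrow> 'a \<Rightarrow> real"
  assumes M: "prob_space M" and \<nu>m: "\<nu> \<in> M \<rightarrow>\<^sub>M prob_algebra U01"
    and C: "cond_iid_given_measure M \<nu> v"
    and H: "H \<in> borel_measurable (PiM {1..n} (\<lambda>_. U01))"
  shows "(\<integral>\<^sup>+\<omega>. H (\<lambda>i\<in>{1..n}. v i \<omega>) \<partial>M) = (\<integral>\<^sup>+\<omega>. \<integral>\<^sup>+x. H x \<partial>PiM {1..n} (\<lambda>_. \<nu> \<omega>) \<partial>M)"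
proof -
  interpret prob_space M by fact
  define I where "I = {1..n::nat}"
  have vm: "\<And>i. i \<in> I \<Longrightarrow> v i \<in> M \<rightarrow>\<^sub>M U01" using C by (auto simp: cond_iid_given_measure_def I_def)
  have cond: "\<And>m A B. A \<in> sets (vimage_algebra (space M) \<nu> (prob_algebra U01)) \<Longrightarrow> (\<forall>i. B i \<in> sets U01) \<Longrightarrow>
        measure M (A \<inter> {\<omega>\<in>space M. \<forall>i\<in>{1..m}. v i \<omega> \<in> B i})
        = (\<integral>\<omega>. indicator A \<omega> * (\<Prod>i\<in>{1..m}. measure (\<nu> \<omega>) (B i)) \<partial>M)"
    using C by (auto simp: cond_iid_given_measure_def)
  define V where "V = (\<lambda>\<omega>. \<lambda>i\<in>I. v i \<omega>)"
  have Vm: "V \<in> M \<rightarrow>\<^sub>M PiM I (\<lambda>_. U01)"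
    unfolding V_def by (rule measurable_restrict) (use vm in auto)
  have \<nu>p: "\<omega> \<in> space M \<Longrightarrow> prob_space (\<nu> \<omega>)" for \<omega>
    using measurable_space[OF \<nu>m] by (auto simp: space_prob_algebra)
  have \<nu>s: "\<omega> \<in> space M \<Longrightarrow> sets (\<nu> \<omega>) = sets U01" for \<omega>
    using measurable_space[OF \<nu>m] by (auto simp: space_prob_algebra)
  have \<nu>e: "A \<in> sets U01 \<Longrightarrow> (\<lambda>\<omega>. emeasure (\<nu> \<omega>) A) \<in> borel_measurable M" for A
    using measurable_compose[OF measurable_prob_algebraD[OF \<nu>m] measurable_emeasure_subprob_algebra] by blast
  have Km: "(\<lambda>\<omega>. PiM I (\<lambda>i. \<nu> \<omega>)) \<in> M \<rightarrow>\<^sub>M prob_algebra (PiM I (\<lambda>_. U01))"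
    by (rule measurable_PiM_kernel) (auto simp: I_def \<nu>p \<nu>s \<nu>e)
  have Ks: "\<omega> \<in> space M \<Longrightarrow> sets (PiM I (\<lambda>i. \<nu> \<omega>)) = sets (PiM I (\<lambda>_. U01))" for \<omega>
    by (rule sets_PiM_cong) (auto simp: \<nu>s)
  have eq: "distr M (PiM I (\<lambda>_. U01)) V = bind M (\<lambda>\<omega>. PiM I (\<lambda>i. \<nu> \<omega>))"
  proof (rule measure_eqI_PiM_finite[where M="\<lambda>_. U01" and I=I and A="\<lambda>_. space (PiM I (\<lambda>_. U01))"])
    show "finite I" by (simp add: I_def)
    show "sets (distr M (PiM I (\<lambda>_. U01)) V) = sets (PiM I (\<lambda>_. U01))" by simp
    show "sets (bind M (\<lambda>\<omega>. PiM I (\<lambda>i. \<nu> \<omega>))) = sets (PiM I (\<lambda>_. U01))"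
      using Ks by (subst sets_bind) (auto simp: not_empty)
    show "range (\<lambda>_. space (PiM I (\<lambda>_. U01))) \<subseteq> prod_algebra I (\<lambda>_. U01)"
      using space_in_prod_algebra[of I "\<lambda>_. U01"] by (auto simp: space_PiM)
    show "(\<Union>i::nat. space (PiM I (\<lambda>_. U01))) = space (PiM I (\<lambda>_. U01))" by simp
    show "emeasure (distr M (PiM I (\<lambda>_. U01)) V) (space (PiM I (\<lambda>_. U01))) \<noteq> \<infinity>" for i::nat
      using Vm by (subst emeasure_distr) auto
  next
    fix A assume A: "\<And>i. i \<in> I \<Longrightarrow> A i \<in> sets U01"
    define B where "B i = (if i \<in> I then A i else space U01)" for i
    have B: "\<forall>i. B i \<in> sets U01" using A sets.top[of U01] by (auto simp: B_def)
    have "emeasure (distr M (PiM I (\<lambda>_. U01)) V) (Pi\<^sub>E I A) = emeasure M (V -` Pi\<^sub>E I A \<inter> space M)"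
      using Vm A by (intro emeasure_distr) (auto simp: I_def)
    also have "V -` Pi\<^sub>E I A \<inter> space M = space M \<inter> {\<omega>\<in>space M. \<forall>i\<in>{1..n}. v i \<omega> \<in> B i}"
      unfolding V_def vimage_def restrict_PiE_iff by (auto simp: B_def I_def)
    also have "emeasure M \<dots> = ennreal (measure M \<dots>)" by (simp add: emeasure_eq_measure)
    also have "measure M (space M \<inter> {\<omega>\<in>space M. \<forall>i\<in>{1..n}. v i \<omega> \<in> B i}) = 
       (\<integral>\<omega>. indicator (space M) \<omega> * (\<Prod>i\<in>{1..n}. measure (\<nu> \<omega>) (B i)) \<partial>M)"
      by (rule cond[OF _ B]) (metis sets.top space_vimage_algebra)
    also have "\<dots> = (\<integral>\<omega>. (\<Prod>i\<in>I. enn2real (emeasure (\<nu> \<omega>) (A i))) \<partial>M)"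
      by (rule Bochner_Integration.integral_cong[OF refl]) (auto simp: I_def B_def measure_def intro!: prod.cong)
    also have "ennreal \<dots> = (\<integral>\<^sup>+\<omega>. ennreal (\<Prod>i\<in>I. enn2real (emeasure (\<nu> \<omega>) (A i))) \<partial>M)"
    proof (rule nn_integral_eq_integral[symmetric])
      have m: "(\<lambda>\<omega>. \<Prod>i\<in>I. enn2real (emeasure (\<nu> \<omega>) (A i))) \<in> borel_measurable M"
        using A \<nu>e by (intro borel_measurable_prod) auto
      have "\<omega> \<in> space M \<Longrightarrow> norm (\<Prod>i\<in>I. enn2real (emeasure (\<nu> \<omega>) (A i))) \<le> 1" for \<omega>
      proof -
        assume w: "\<omega> \<in> space M"
        interpret N: prob_space "\<nu> \<omega>" using \<nu>p[OF w] .
        have "\<bar>\<Prod>i\<in>I. enn2real (emeasure (\<nu> \<omega>) (A i))\<bar> = (\<Prod>i\<in>I. N.prob (A i))"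
          by (simp add: measure_def abs_prod)
        also have "\<dots> \<le> 1" by (intro prod_le_1) auto
        finally show ?thesis by simp
      qed
      then show "integrable M (\<lambda>\<omega>. \<Prod>i\<in>I. enn2real (emeasure (\<nu> \<omega>) (A i)))"
        using m by (intro integrable_const_bound[where B=1]) auto
      show "AE \<omega> in M. 0 \<le> (\<Prod>i\<in>I. enn2real (emeasure (\<nu> \<omega>) (A i)))" by (intro AE_I2 prod_nonneg) auto
    qed
    also have "\<dots> = (\<integral>\<^sup>+\<omega>. emeasure (PiM I (\<lambda>i. \<nu> \<omega>)) (Pi\<^sub>E I A) \<partial>M)"
    proof (rule nn_integral_cong)
      fix \<omega> assume w: "\<omega> \<in> space M"
      interpret Q: product_prob_space "\<lambda>_. \<nu> \<omega>"
        using \<nu>p[OF w] by (auto simp: product_prob_space_def product_prob_space_axioms_def product_sigma_finite_def prob_space_imp_sigma_finite)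
      have fin: "emeasure (\<nu> \<omega>) (A i) = ennreal (enn2real (emeasure (\<nu> \<omega>) (A i)))" for i
        by (simp add: Q.M.emeasure_eq_measure measure_def[symmetric])
      show "ennreal (\<Prod>i\<in>I. enn2real (emeasure (\<nu> \<omega>) (A i))) = emeasure (PiM I (\<lambda>i. \<nu> \<omega>)) (Pi\<^sub>E I A)"
        using A w by (subst Q.emeasure_PiM) (auto simp: I_def \<nu>s prod_ennreal[symmetric] fin[symmetric])
    qed
    also have "\<dots> = emeasure (bind M (\<lambda>\<omega>. PiM I (\<lambda>i. \<nu> \<omega>))) (Pi\<^sub>E I A)"
      using A by (intro emeasure_bind[symmetric, where N="PiM I (\<lambda>_. U01)"] measurable_prob_algebraD[OF Km]) (auto simp: not_empty I_def intro!: sets_PiM_I_finite)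
    finally show "emeasure (distr M (PiM I (\<lambda>_. U01)) V) (Pi\<^sub>E I A) = emeasure (bind M (\<lambda>\<omega>. PiM I (\<lambda>i. \<nu> \<omega>))) (Pi\<^sub>E I A)" .
  qed
  have "(\<integral>\<^sup>+\<omega>. H (V \<omega>) \<partial>M) = (\<integral>\<^sup>+x. H x \<partial>distr M (PiM I (\<lambda>_. U01)) V)"
    using H Vm by (intro nn_integral_distr[symmetric]) (auto simp: I_def)
  also have "\<dots> = (\<integral>\<^sup>+\<omega>. \<integral>\<^sup>+x. H x \<partial>PiM I (\<lambda>_. \<nu> \<omega>) \<partial>M)"
    unfolding eq using H measurable_prob_algebraD[OF Km] by (intro nn_integral_bind) (auto simp: I_def)
  finally show ?thesis by (simp add: V_def I_def)
qed

definition tiep :: "'i set \<Rightarrow> ('i \<Rightarrow> 'b) \<Rightarrow> 'i set set \<Rightarrow> bool" where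
  "tiep I x P \<longleftrightarrow> (\<forall>i\<in>I. \<forall>j\<in>I. (x i = x j) \<longleftrightarrow> (\<exists>A\<in>P. i \<in> A \<and> j \<in> A))"

definition tier :: "'i set \<Rightarrow> ('i \<Rightarrow> nat) \<Rightarrow> 'i set set \<Rightarrow> bool" where
  "tier I \<sigma> P \<longleftrightarrow> (\<forall>i\<in>I. \<forall>j\<in>I. (i = j \<or> (\<sigma> i = \<sigma> j \<and> \<sigma> i \<noteq> 0)) \<longleftrightarrow> (\<exists>A\<in>P. i \<in> A \<and> j \<in> A))"

definition kap :: "real measure \<Rightarrow> (nat \<Rightarrow> real) \<Rightarrow> nat \<Rightarrow> real measure" where
  "kap \<nu>0 \<eta> n = (case n of 0 \<Rightarrow> \<nu>0 | Suc j \<Rightarrow> return U01 (\<eta> j))"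

lemma comp_borel_PiM:
  fixes L :: "'i \<Rightarrow> real measure"
  assumes "i \<in> I" "sets (L i) = sets U01"
  shows "(\<lambda>x. x i) \<in> borel_measurable (PiM I L)"
proof -
  have "(\<lambda>x. x i) \<in> PiM I L \<rightarrow>\<^sub>M L i" using assms by simp
  moreover have "(\<lambda>x. x) \<in> L i \<rightarrow>\<^sub>M borel"
    by (subst measurable_cong_sets[OF assms(2) refl]) (simp add: U01_def measurable_restrict_space1)
  ultimately show ?thesis using measurable_compose by fastforce
qed

lemma tiep_pred:
  fixes L :: "'i \<Rightarrow> real measure"
  assumes I: "finite I" and Ls: "\<And>l. l \<in> I \<Longrightarrow> sets (L l) = sets U01"
  shows "Measurable.pred (PiM I L) (\<lambda>x. tiep I x P)"
  unfolding tiep_def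
proof (intro pred_intros_finite[OF I] pred_intros_logic)
  fix i j assume "i \<in> I" "j \<in> I"
  then show "Measurable.pred (PiM I L) (\<lambda>x. x i = x j)"
    unfolding pred_def using comp_borel_PiM[of i I L] comp_borel_PiM[of j I L] Ls by (intro borel_measurable_eq) auto
qed auto

lemma diffuse_prob: "diffuse_base \<nu>0 \<Longrightarrow> prob_space \<nu>0 \<and> sets \<nu>0 = sets U01"
  by (auto simp: diffuse_base_def space_prob_algebra)

lemma kap_prob:
  assumes "diffuse_base \<nu>0" "\<And>j. \<eta> j \<in> {0..1}"
  shows "prob_space (kap \<nu>0 \<eta> n)" "sets (kap \<nu>0 \<eta> n) = sets U01"
  using assms diffuse_prob[OF assms(1)] by (auto simp: kap_def intro!: prob_space_return split: nat.split)

lemma AE_tie: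
  fixes \<sigma> :: "'i \<Rightarrow> nat"
  assumes \<nu>0: "diffuse_base \<nu>0" and \<eta>: "\<And>j. \<eta> j \<in> {0..1}" "inj \<eta>" and I: "finite I"
  shows "AE x in PiM I (\<lambda>i. kap \<nu>0 \<eta> (\<sigma> i)).
           \<forall>i\<in>I. \<forall>j\<in>I. (x i = x j) \<longleftrightarrow> (i = j \<or> (\<sigma> i = \<sigma> j \<and> \<sigma> i \<noteq> 0))"
proof -
  let ?L = "\<lambda>i. kap \<nu>0 \<eta> (\<sigma> i)"
  have pps: "product_prob_space ?L"
    using kap_prob[OF \<nu>0 \<eta>(1)] by (auto simp: product_prob_space_def product_prob_space_axioms_def product_sigma_finite_def prob_space_imp_sigma_finite)
  interpret product_prob_space ?L by (rule pps)
  have Ls: "sets (?L l) = sets U01" for l using kap_prob[OF \<nu>0 \<eta>(1)] by auto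
  have dif: "emeasure \<nu>0 {y} = 0" for y using \<nu>0 by (auto simp: diffuse_base_def)
  have AEc: "AE x in PiM I ?L. x i = \<eta> a" if "i \<in> I" "\<sigma> i = Suc a" for i a
  proof (rule AE_PiM_component)
    show "prob_space (?L l)" for l using kap_prob[OF \<nu>0 \<eta>(1)] by auto
    have "Measurable.pred U01 (\<lambda>y. y = \<eta> a)" 
      by (rule pred_eq_const1[OF measurable_ident_sets[OF refl]]) (simp add: U01_def sets_restrict_space_iff)
    moreover have r: "?L i = return U01 (\<eta> a)" by (simp add: kap_def that)
    ultimately show "AE y in ?L i. y = \<eta> a" unfolding r using AE_return[of "\<eta> a" U01 "\<lambda>y. y = \<eta> a"] \<eta>(1)[of a]
      by simp
  qed fact
  show ?thesis
  proof (intro eventually_ball_finite[OF I] ballI)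
    fix i j assume ij: "i \<in> I" "j \<in> I"
    show "AE x in PiM I ?L. (x i = x j) \<longleftrightarrow> (i = j \<or> (\<sigma> i = \<sigma> j \<and> \<sigma> i \<noteq> 0))"
    proof (cases "i = j")
      case True then show ?thesis by simp
    next
      case False
      show ?thesis
      proof (cases "\<sigma> i = 0")
        case True
        have "AE x in PiM I ?L. x i \<noteq> x j"
          by (rule AE_PiM_diffuse_neq[where L="?L"]) (use ij False True Ls dif I pps in \<open>auto simp: kap_def\<close>)
        then show ?thesis by eventually_elim (use True False in auto)
      next
        case si: False
        show ?thesis
        proof (cases "\<sigma> j = 0")
          case True
          have "AE x in PiM I ?L. x j \<noteq> x i"
            by (rule AE_PiM_diffuse_neq[where L="?L"]) (use ij False True Ls dif I pps in \<open>auto simp: kap_def\<close>)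
          then show ?thesis by eventually_elim (use True False in auto)
        next
          case sj: False
          obtain a b where a: "\<sigma> i = Suc a" and b: "\<sigma> j = Suc b" using si sj not0_implies_Suc by blast
          have "AE x in PiM I ?L. x i = \<eta> a \<and> x j = \<eta> b" using AEc[OF ij(1) a] AEc[OF ij(2) b] by eventually_elim auto
          then show ?thesis by eventually_elim (use a b False \<eta>(2) in \<open>auto dest: injD\<close>)
        qed
      qed
    qed
  qed
qed

lemma integral_tie:
  fixes \<sigma> :: "'i \<Rightarrow> nat" and g :: "'i \<Rightarrow> real \<Rightarrow> ennreal"
  assumes \<nu>0: "diffuse_base \<nu>0" and \<eta>: "\<And>j. \<eta> j \<in> {0..1}" "inj \<eta>" and I: "finite I"
    and g: "\<And>i. i \<in> I \<Longrightarrow> g i \<in> borel_measurable borel"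
  shows "(\<integral>\<^sup>+x. (\<Prod>i\<in>I. g i (x i)) * indicator {x. tiep I x P} x \<partial>PiM I (\<lambda>i. kap \<nu>0 \<eta> (\<sigma> i)))
       = (if tier I \<sigma> P then \<Prod>i\<in>I. \<integral>\<^sup>+y. g i y \<partial>kap \<nu>0 \<eta> (\<sigma> i) else 0)"
proof -
  let ?L = "\<lambda>i. kap \<nu>0 \<eta> (\<sigma> i)"
  have pps: "product_prob_space ?L"
    using kap_prob[OF \<nu>0 \<eta>(1)] by (auto simp: product_prob_space_def product_prob_space_axioms_def product_sigma_finite_def prob_space_imp_sigma_finite)
  interpret product_prob_space ?L by (rule pps)
  have Ls: "sets (?L l) = sets U01" for l using kap_prob[OF \<nu>0 \<eta>(1)] by auto
  have gm: "i \<in> I \<Longrightarrow> g i \<in> borel_measurable (?L i)" for i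
    using g[of i] by (subst measurable_cong_sets[OF Ls refl]) (simp add: U01_def measurable_restrict_space1)
  have "(\<integral>\<^sup>+x. (\<Prod>i\<in>I. g i (x i)) * indicator {x. tiep I x P} x \<partial>PiM I ?L)
      = (\<integral>\<^sup>+x. (\<Prod>i\<in>I. g i (x i)) * (if tier I \<sigma> P then 1 else 0) \<partial>PiM I ?L)"
  proof (rule nn_integral_cong_AE)
    show "AE x in PiM I ?L. (\<Prod>i\<in>I. g i (x i)) * indicator {x. tiep I x P} x = (\<Prod>i\<in>I. g i (x i)) * (if tier I \<sigma> P then 1 else 0)"
      using AE_tie[OF \<nu>0 \<eta> I, of \<sigma>] by eventually_elim (auto simp: tiep_def tier_def indicator_def)
  qed
  also have "\<dots> = (if tier I \<sigma> P then \<integral>\<^sup>+x. (\<Prod>i\<in>I. g i (x i)) \<partial>PiM I ?L else 0)"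
    by simp
  also have "\<dots> = (if tier I \<sigma> P then \<Prod>i\<in>I. \<integral>\<^sup>+y. g i y \<partial>?L i else 0)"
    using product_nn_integral_prod[OF I gm] by simp
  finally show ?thesis .
qed

definition wts :: "(nat \<Rightarrow> real) \<Rightarrow> nat \<Rightarrow> ennreal" where
  "wts pv n = (case n of 0 \<Rightarrow> ennreal (1 - suminf pv) | Suc j \<Rightarrow> ennreal (pv j))"

lemma ennreal_suminf_head: "(\<Sum>n. (f::nat \<Rightarrow> ennreal) n) = f 0 + (\<Sum>n. f (Suc n))"
proof -
  have "(\<lambda>n. f (Suc n)) sums (\<Sum>n. f (Suc n))" by (rule summable_sums) (rule summableI)
  then have "f sums ((\<Sum>n. f (Suc n)) + f 0)" by (rule sums_Suc)
  then show ?thesis by (simp add: sums_iff add.commute)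
qed

lemma mixture_repr:
  assumes \<nu>0: "diffuse_base \<nu>0" and \<eta>: "\<And>j. \<eta> j \<in> {0..1}"
    and pv: "\<And>j. 0 \<le> pv j" "summable pv" "suminf pv \<le> 1"
    and \<mu>: "\<mu> \<in> space (prob_algebra U01)"
    and eq: "\<forall>B\<in>sets U01. measure \<mu> B = (\<Sum>j. pv j * indicator B (\<eta> j)) + (1 - suminf pv) * measure \<nu>0 B"
  shows "prob_space (density (count_space UNIV) (wts pv))"
    and "\<mu> = bind (density (count_space UNIV) (wts pv)) (kap \<nu>0 \<eta>)"
proof -
  have \<mu>p: "prob_space \<mu>" and \<mu>s: "sets \<mu> = sets U01" using \<mu> by (auto simp: space_prob_algebra)
  interpret \<mu>: prob_space \<mu> by fact
  have \<nu>0p: "prob_space \<nu>0" and \<nu>0s: "sets \<nu>0 = sets U01" using diffuse_prob[OF \<nu>0] by auto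
  interpret \<nu>0: prob_space \<nu>0 by fact
  have kp: "prob_space (kap \<nu>0 \<eta> n)" "sets (kap \<nu>0 \<eta> n) = sets U01" for n using kap_prob[OF \<nu>0 \<eta>] by auto
  have ws: "(\<Sum>n. wts pv n * f n) = ennreal (1 - suminf pv) * f 0 + (\<Sum>j. ennreal (pv j) * f (Suc j))" for f
    by (subst ennreal_suminf_head) (simp add: wts_def)
  have km: "kap \<nu>0 \<eta> \<in> density (count_space UNIV) (wts pv) \<rightarrow>\<^sub>M subprob_algebra U01"
    by (subst measurable_cong_sets[OF sets_density refl])
       (auto simp: measurable_count_space_eq1 space_subprob_algebra kp prob_space_imp_subprob_space)
  have emb: "emeasure (bind (density (count_space UNIV) (wts pv)) (kap \<nu>0 \<eta>)) B
      = ennreal (1 - suminf pv) * emeasure \<nu>0 B + (\<Sum>j. ennreal (pv j) * indicator B (\<eta> j))"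
    if B: "B \<in> sets U01" for B
  proof -
    have "emeasure (bind (density (count_space UNIV) (wts pv)) (kap \<nu>0 \<eta>)) B
       = (\<integral>\<^sup>+c. emeasure (kap \<nu>0 \<eta> c) B \<partial>density (count_space UNIV) (wts pv))"
      using B km by (intro emeasure_bind) auto
    also have "\<dots> = (\<integral>\<^sup>+c. wts pv c * emeasure (kap \<nu>0 \<eta> c) B \<partial>count_space UNIV)"
      by (rule nn_integral_density) auto
    also have "\<dots> = (\<Sum>c. wts pv c * emeasure (kap \<nu>0 \<eta> c) B)"
      by (rule nn_integral_count_space_nat)
    also have "\<dots> = ennreal (1 - suminf pv) * emeasure \<nu>0 B + (\<Sum>j. ennreal (pv j) * indicator B (\<eta> j))"
      unfolding ws using B \<eta> by (simp add: kap_def U01_def emeasure_return sets_restrict_space_iff)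
    finally show ?thesis .
  qed
  show "prob_space (density (count_space UNIV) (wts pv))"
  proof
    have "emeasure (density (count_space UNIV) (wts pv)) UNIV = (\<integral>\<^sup>+c. wts pv c \<partial>count_space UNIV)"
      by (simp add: emeasure_density)
    also have "\<dots> = (\<Sum>c. wts pv c)" by (rule nn_integral_count_space_nat)
    also have "\<dots> = ennreal (1 - suminf pv) + (\<Sum>j. ennreal (pv j))"
      using ws[of "\<lambda>_. 1"] by simp
    also have "\<dots> = ennreal (1 - suminf pv) + ennreal (suminf pv)"
      using pv by (simp add: suminf_ennreal2)
    also have "\<dots> = 1" using pv by (subst ennreal_plus[symmetric]) (auto intro: suminf_nonneg)
    finally show "emeasure (density (count_space UNIV) (wts pv)) (space (density (count_space UNIV) (wts pv))) = 1" by simp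
  qed
  show "\<mu> = bind (density (count_space UNIV) (wts pv)) (kap \<nu>0 \<eta>)"
  proof (rule measure_eqI)
    show "sets \<mu> = sets (bind (density (count_space UNIV) (wts pv)) (kap \<nu>0 \<eta>))"
      by (subst sets_bind[where N=U01]) (auto simp: \<mu>s kp)
  next
    fix B assume "B \<in> sets \<mu>"
    then have B: "B \<in> sets U01" by (simp add: \<mu>s)
    have sm: "summable (\<lambda>j. pv j * indicator B (\<eta> j))"
      by (rule summable_comparison_test'[OF pv(2), of 0]) (auto simp: pv(1) indicator_def)
    have "emeasure \<mu> B = ennreal (measure \<mu> B)" by (simp add: \<mu>.emeasure_eq_measure)
    also have "\<dots> = ennreal ((\<Sum>j. pv j * indicator B (\<eta> j)) + (1 - suminf pv) * measure \<nu>0 B)"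
      using eq B by simp
    also have "\<dots> = ennreal (1 - suminf pv) * emeasure \<nu>0 B + (\<Sum>j. ennreal (pv j) * indicator B (\<eta> j))"
    proof -
      have "ennreal (\<Sum>j. pv j * indicator B (\<eta> j)) = (\<Sum>j. ennreal (pv j * indicator B (\<eta> j)))"
        using sm pv by (intro suminf_ennreal2[symmetric]) auto
      also have "\<dots> = (\<Sum>j. ennreal (pv j) * indicator B (\<eta> j))"
        by (intro suminf_cong) (auto simp: indicator_def)
      finally have 1: "ennreal (\<Sum>j. pv j * indicator B (\<eta> j)) = (\<Sum>j. ennreal (pv j) * indicator B (\<eta> j))" .
      have 2: "ennreal ((1 - suminf pv) * measure \<nu>0 B) = ennreal (1 - suminf pv) * emeasure \<nu>0 B"
        using pv by (simp add: ennreal_mult \<nu>0.emeasure_eq_measure)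
      show ?thesis
        using 1 2 pv sm by (subst ennreal_plus) (auto intro!: suminf_nonneg mult_nonneg_nonneg simp: add.commute)
    qed
    also have "\<dots> = emeasure (bind (density (count_space UNIV) (wts pv)) (kap \<nu>0 \<eta>)) B"
      by (rule emb[OF B, symmetric])
    finally show "emeasure \<mu> B = emeasure (bind (density (count_space UNIV) (wts pv)) (kap \<nu>0 \<eta>)) B" .
  qed
qed

lemma indep_var_nn_integral_mult:
  assumes M: "prob_space M" and ind: "prob_space.indep_var M S X T Y"
    and a: "a \<in> borel_measurable S" and b: "b \<in> borel_measurable T"
  shows "(\<integral>\<^sup>+\<omega>. a (X \<omega>) * b (Y \<omega>) \<partial>M) = (\<integral>\<^sup>+\<omega>. a (X \<omega>) \<partial>M) * (\<integral>\<^sup>+\<omega>. b (Y \<omega>) \<partial>M)"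
proof -
  interpret prob_space M by fact
  have X: "X \<in> M \<rightarrow>\<^sub>M S" and Y: "Y \<in> M \<rightarrow>\<^sub>M T"
    and D: "distr M S X \<Otimes>\<^sub>M distr M T Y = distr M (S \<Otimes>\<^sub>M T) (\<lambda>x. (X x, Y x))"
    using ind by (auto simp: indep_var_distribution_eq)
  interpret DY: prob_space "distr M T Y" using Y by (rule prob_space_distr)
  have "(\<integral>\<^sup>+\<omega>. a (X \<omega>) * b (Y \<omega>) \<partial>M) = (\<integral>\<^sup>+z. a (fst z) * b (snd z) \<partial>distr M (S \<Otimes>\<^sub>M T) (\<lambda>x. (X x, Y x)))"
    using X Y a b by (subst nn_integral_distr) auto
  also have "\<dots> = (\<integral>\<^sup>+z. a (fst z) * b (snd z) \<partial>(distr M S X \<Otimes>\<^sub>M distr M T Y))"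
    by (simp add: D)
  also have "\<dots> = (\<integral>\<^sup>+x. \<integral>\<^sup>+y. a x * b y \<partial>distr M T Y \<partial>distr M S X)"
    using a b by (subst DY.nn_integral_fst[symmetric]) auto
  also have "\<dots> = (\<integral>\<^sup>+x. a x * (\<integral>\<^sup>+y. b y \<partial>distr M T Y) \<partial>distr M S X)"
    using b by (subst nn_integral_cmult) auto
  also have "\<dots> = (\<integral>\<^sup>+x. a x \<partial>distr M S X) * (\<integral>\<^sup>+y. b y \<partial>distr M T Y)"
    using a by (subst nn_integral_multc) auto
  also have "\<dots> = (\<integral>\<^sup>+\<omega>. a (X \<omega>) \<partial>M) * (\<integral>\<^sup>+\<omega>. b (Y \<omega>) \<partial>M)"
    using X Y a b by (simp add: nn_integral_distr)
  finally show ?thesis .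
qed

lemma indep_eta_prod:
  fixes \<eta> :: "nat \<Rightarrow> 'a \<Rightarrow> real" and h :: "'k \<Rightarrow> real \<Rightarrow> ennreal"
  assumes M: "prob_space M" and ind: "prob_space.indep_vars M (\<lambda>_. U01) \<eta> UNIV"
    and \<eta>m: "\<And>j. \<eta> j \<in> M \<rightarrow>\<^sub>M U01" and \<eta>d: "\<And>j. distr M U01 (\<eta> j) = \<nu>0"
    and K: "finite K" "inj_on \<phi> K" and h: "\<And>A. A \<in> K \<Longrightarrow> h A \<in> borel_measurable borel"
  shows "(\<integral>\<^sup>+\<omega>. (\<Prod>A\<in>K. h A (\<eta> (\<phi> A) \<omega>)) \<partial>M) = (\<Prod>A\<in>K. \<integral>\<^sup>+x. h A x \<partial>\<nu>0)"
proof (cases "K = {}")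
  case True
  interpret prob_space M by fact
  show ?thesis using True by (simp add: emeasure_space_1)
next
  case False
  interpret prob_space M by fact
  define J where "J = \<phi> ` K"
  define h' where "h' j = h (inv_into K \<phi> j)" for j
  have J: "finite J" "J \<noteq> {}" using K False by (auto simp: J_def)
  have hU: "j \<in> J \<Longrightarrow> h' j \<in> borel_measurable U01" for j
    using h[of "inv_into K \<phi> j"] by (auto simp: h'_def J_def U01_def inv_into_into measurable_restrict_space1)
  have re: "(\<Prod>A\<in>K. f A (\<phi> A)) = (\<Prod>j\<in>J. f (inv_into K \<phi> j) j)" for f :: "'k \<Rightarrow> nat \<Rightarrow> ennreal"
    unfolding J_def using K by (subst prod.reindex) (auto simp: inv_into_f_f)
  have \<nu>0p: "prob_space \<nu>0" using \<eta>d[of 0] \<eta>m[of 0] by (metis prob_space_distr)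
  interpret P: product_prob_space "\<lambda>_::nat. \<nu>0"
    using \<nu>0p by (auto simp: product_prob_space_def product_prob_space_axioms_def product_sigma_finite_def prob_space_imp_sigma_finite)
  have \<nu>0s: "sets \<nu>0 = sets U01" using \<eta>d[of 0] by (metis sets_distr)
  have indJ: "indep_vars (\<lambda>_. U01) \<eta> J" using ind by (rule indep_vars_subset) auto
  then have D: "distr M (PiM J (\<lambda>_. U01)) (\<lambda>x. \<lambda>j\<in>J. \<eta> j x) = PiM J (\<lambda>j. distr M U01 (\<eta> j))"
    using indep_vars_iff_distr_eq_PiM[OF J(2) \<eta>m] by simp
  have pm: "(\<lambda>x. \<Prod>j\<in>J. h' j (x j)) \<in> borel_measurable (PiM J (\<lambda>_. U01))"
    using hU by (intro borel_measurable_prod_ennreal) (auto intro: measurable_compose[OF measurable_component_singleton])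
  have "(\<integral>\<^sup>+\<omega>. (\<Prod>A\<in>K. h A (\<eta> (\<phi> A) \<omega>)) \<partial>M) = (\<integral>\<^sup>+\<omega>. (\<Prod>j\<in>J. h' j (\<eta> j \<omega>)) \<partial>M)"
    using re[of "\<lambda>A j. h A (\<eta> j _)"] by (simp add: h'_def re)
  also have "\<dots> = (\<integral>\<^sup>+x. (\<Prod>j\<in>J. h' j (x j)) \<partial>distr M (PiM J (\<lambda>_. U01)) (\<lambda>x. \<lambda>j\<in>J. \<eta> j x))"
    using pm \<eta>m by (subst nn_integral_distr) (auto intro!: measurable_restrict)
  also have "\<dots> = (\<integral>\<^sup>+x. (\<Prod>j\<in>J. h' j (x j)) \<partial>PiM J (\<lambda>_. \<nu>0))"
    unfolding D \<eta>d ..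
  also have "\<dots> = (\<Prod>j\<in>J. \<integral>\<^sup>+y. h' j y \<partial>\<nu>0)"
    using hU J by (intro P.product_nn_integral_prod) (auto simp: measurable_cong_sets[OF \<nu>0s refl])
  also have "\<dots> = (\<Prod>A\<in>K. \<integral>\<^sup>+x. h A x \<partial>\<nu>0)"
    using re[of "\<lambda>A j. \<integral>\<^sup>+y. h' j y \<partial>\<nu>0"] K by (simp add: h'_def inv_into_f_f)
  finally show ?thesis .
qed

lemma partition_rel_unique:
  assumes P: "partition_on I P" and R: "\<forall>i\<in>I. \<forall>j\<in>I. R i j \<longleftrightarrow> (\<exists>A\<in>P. i \<in> A \<and> j \<in> A)"
    and A: "A \<in> P" and i: "i \<in> A"
  shows "A = {j\<in>I. R i j}"
proof -
  have AI: "A \<subseteq> I" using P A by (auto simp: partition_on_def)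
  have dis: "\<And>A' B. A' \<in> P \<Longrightarrow> B \<in> P \<Longrightarrow> A' \<noteq> B \<Longrightarrow> A' \<inter> B = {}"
    using P by (auto simp: partition_on_def disjoint_def)
  show ?thesis
  proof safe
    fix j assume "j \<in> A" then show "j \<in> I" using AI by auto
    show "R i j" using R AI i A \<open>j\<in>A\<close> by blast
  next
    fix j assume j: "j \<in> I" "R i j"
    then obtain A' where "A' \<in> P" "i \<in> A'" "j \<in> A'" using R AI i by blast
    then show "j \<in> A" using dis[of A A'] A i by blast
  qed
qed

lemma partition_rel_eq:
  assumes P: "partition_on I P" and R: "\<forall>i\<in>I. \<forall>j\<in>I. R i j \<longleftrightarrow> (\<exists>A\<in>P. i \<in> A \<and> j \<in> A)"
  shows "P = (\<lambda>i. {j\<in>I. R i j}) ` I"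
proof safe
  fix A assume A: "A \<in> P"
  have "A \<noteq> {}" using P A by (auto simp: partition_on_def)
  then obtain i where i: "i \<in> A" by blast
  then have "i \<in> I" using P A by (auto simp: partition_on_def)
  then show "A \<in> (\<lambda>i. {j\<in>I. R i j}) ` I" using partition_rel_unique[OF P R A i] by auto
next
  fix i assume i: "i \<in> I"
  then obtain A where "A \<in> P" "i \<in> A" using P by (auto simp: partition_on_def)
  then show "{j\<in>I. R i j} \<in> P" using partition_rel_unique[OF P R] by metis
qed

lemma tiep_unique:
  assumes I: "finite I"
  shows "{P. partition_on I P \<and> tiep I x P} = {(\<lambda>i. {j\<in>I. x i = x j}) ` I}"
proof -
  define P0 where "P0 = (\<lambda>i. {j\<in>I. x i = x j}) ` I"
  have part: "partition_on I P0"
    unfolding partition_on_def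
  proof (intro conjI)
    show "\<Union> P0 = I" unfolding P0_def by auto
    show "{} \<notin> P0" unfolding P0_def by auto
    show "disjoint P0"
    proof (rule disjointI)
      fix A B assume "A \<in> P0" "B \<in> P0" "A \<noteq> B"
      then obtain i j where ij: "i \<in> I" "j \<in> I" "A = {l\<in>I. x i = x l}" "B = {l\<in>I. x j = x l}"
        unfolding P0_def by blast
      with \<open>A \<noteq> B\<close> have "x i \<noteq> x j" by auto
      then show "A \<inter> B = {}" using ij by auto
    qed
  qed
  have tie: "tiep I x P0"
    unfolding tiep_def P0_def by auto
  have "P = P0" if "partition_on I P" "tiep I x P" for P
    unfolding P0_def using that by (intro partition_rel_eq) (auto simp: tiep_def)
  then have "{P. partition_on I P \<and> tiep I x P} = {P0}" using part tie by blast
  then show ?thesis by (simp add: P0_def)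
qed

lemma sum_tiep_indicator:
  assumes I: "finite I"
  shows "(\<Sum>P | partition_on I P. (if tiep I x P then 1 else 0 :: ennreal)) = 1"
proof -
  have fin: "finite {P. partition_on I P}" using I by (rule finitely_many_partition_on)
  have "(\<Sum>P | partition_on I P. (if tiep I x P then 1 else 0 :: ennreal)) = (\<Sum>P\<in>{P. partition_on I P \<and> tiep I x P}. 1)"
    using fin by (subst sum.inter_filter[symmetric]) (auto intro!: sum.cong)
  also have "\<dots> = 1" unfolding tiep_unique[OF I] by simp
  finally show ?thesis .
qed

lemma wts_meas: "(\<lambda>pv. wts pv n) \<in> borel_measurable (PiM UNIV (\<lambda>_::nat. (borel :: real measure)))"
proof (cases n)
  case 0
  have "(\<lambda>pv::nat\<Rightarrow>real. suminf pv) \<in> borel_measurable (PiM UNIV (\<lambda>_::nat. (borel :: real measure)))"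
    by (rule borel_measurable_suminf) simp
  then show ?thesis using 0 by (simp add: wts_def)
next
  case (Suc j) then show ?thesis by (simp add: wts_def)
qed

lemma factor_sigma:
  fixes M :: "'a measure" and p \<eta> :: "nat \<Rightarrow> 'a \<Rightarrow> real" and g :: "'i \<Rightarrow> real \<Rightarrow> ennreal" and \<sigma> :: "'i \<Rightarrow> nat"
  assumes M: "prob_space M"
   and ind: "prob_space.indep_var M (PiM UNIV (\<lambda>_. borel)) (\<lambda>\<omega> j. p j \<omega>) (PiM UNIV (\<lambda>_. U01)) (\<lambda>\<omega> j. \<eta> j \<omega>)"
   and ind\<eta>: "prob_space.indep_vars M (\<lambda>_. U01) \<eta> UNIV"
   and \<eta>m: "\<And>j. \<eta> j \<in> M \<rightarrow>\<^sub>M U01" and \<eta>d: "\<And>j. distr M U01 (\<eta> j) = \<nu>0"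
   and \<nu>0: "diffuse_base \<nu>0"
   and I: "finite I" and P: "partition_on I P" and T: "tier I \<sigma> P"
   and g: "\<And>i. i \<in> I \<Longrightarrow> g i \<in> borel_measurable borel"
  shows "(\<integral>\<^sup>+\<omega>. (\<Prod>i\<in>I. wts (\<lambda>j. p j \<omega>) (\<sigma> i)) * (\<Prod>i\<in>I. \<integral>\<^sup>+y. g i y \<partial>kap \<nu>0 (\<lambda>j. \<eta> j \<omega>) (\<sigma> i)) \<partial>M)
       = (\<integral>\<^sup>+\<omega>. (\<Prod>i\<in>I. wts (\<lambda>j. p j \<omega>) (\<sigma> i)) \<partial>M) * (\<Prod>A\<in>P. \<integral>\<^sup>+x. (\<Prod>i\<in>A. g i x) \<partial>\<nu>0)"
proof -
  interpret prob_space M by fact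
  define R where "R i j \<longleftrightarrow> (i = j \<or> (\<sigma> i = \<sigma> j \<and> \<sigma> i \<noteq> 0))" for i j
  have T': "\<forall>i\<in>I. \<forall>j\<in>I. R i j \<longleftrightarrow> (\<exists>A\<in>P. i \<in> A \<and> j \<in> A)" using T by (simp add: tier_def R_def)
  define rep where "rep A = (SOME i. i \<in> A)" for A :: "'i set"
  have repA: "A \<in> P \<Longrightarrow> rep A \<in> A" for A
    using P unfolding rep_def partition_on_def by (metis ex_in_conv someI_ex)
  have PI: "A \<in> P \<Longrightarrow> A \<subseteq> I" for A using P by (auto simp: partition_on_def)
  have finP: "finite P" using P I by (simp add: finite_elements)
  have blk: "A \<in> P \<Longrightarrow> A = {j\<in>I. R (rep A) j}" for A
    by (rule partition_rel_unique[OF P T' _ repA])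
  have dis: "\<And>A B. A \<in> P \<Longrightarrow> B \<in> P \<Longrightarrow> A \<noteq> B \<Longrightarrow> A \<inter> B = {}"
    using P by (auto simp: partition_on_def disjoint_def)
  define P0 where "P0 = {A\<in>P. \<sigma> (rep A) = 0}"
  define P1 where "P1 = {A\<in>P. \<sigma> (rep A) \<noteq> 0}"
  define \<phi> where "\<phi> A = \<sigma> (rep A) - 1" for A
  define G where "G A x = (\<Prod>i\<in>A. g i x)" for A x
  have A0: "A \<in> P0 \<Longrightarrow> A = {rep A}" for A
  proof -
    assume A: "A \<in> P0"
    then have "A \<in> P" "\<sigma> (rep A) = 0" by (auto simp: P0_def)
    then have A': "A \<in> P" "\<sigma> (rep A) = 0" by auto
    have "j = rep A" if "j \<in> A" for j
    proof -
      have "R (rep A) j" using blk[OF A'(1)] that by blast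
      then show ?thesis using A'(2) by (auto simp: R_def)
    qed
    then show ?thesis using repA[OF A'(1)] by blast
  qed
  have A1: "A \<in> P1 \<Longrightarrow> i \<in> A \<Longrightarrow> \<sigma> i = Suc (\<phi> A)" for A i
  proof -
    assume A: "A \<in> P1" "i \<in> A"
    then have "A \<in> P" "\<sigma> (rep A) \<noteq> 0" by (auto simp: P1_def)
    moreover have "R (rep A) i" using blk[of A] A \<open>A \<in> P\<close> by blast
    ultimately show ?thesis by (auto simp: R_def \<phi>_def)
  qed
  have inj: "inj_on \<phi> P1"
  proof (rule inj_onI)
    fix A B assume A: "A \<in> P1" and B: "B \<in> P1" and eq: "\<phi> A = \<phi> B"
    then have AB: "A \<in> P" "B \<in> P" "\<sigma> (rep A) \<noteq> 0" "\<sigma> (rep B) \<noteq> 0" by (auto simp: P1_def)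
    then have "\<sigma> (rep A) = \<sigma> (rep B)" using eq by (simp add: \<phi>_def)
    then have "R (rep A) (rep B)" using AB by (simp add: R_def)
    then have "rep B \<in> A" using blk[of A] AB repA[of B] PI[of B] by blast
    then show "A = B" using dis[of A B] AB repA[of B] by blast
  qed
  have G0: "A \<in> P0 \<Longrightarrow> G A = g (rep A)" for A
  proof -
    assume "A \<in> P0"
    then have "A = {rep A}" by (rule A0)
    then obtain r where r: "A = {r}" "rep A = r" by blast
    have "G A x = g r x" for x unfolding G_def r(1) by simp
    then show ?thesis using r(2) by auto
  qed
  have Gm: "A \<in> P \<Longrightarrow> G A \<in> borel_measurable borel" for A
    unfolding G_def using PI[of A] g by (intro borel_measurable_prod_ennreal) auto
  have P01: "P = P0 \<union> P1" "P0 \<inter> P1 = {}" "finite P0" "finite P1" using finP by (auto simp: P0_def P1_def)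
  define C0 where "C0 = (\<Prod>A\<in>P0. \<integral>\<^sup>+x. G A x \<partial>\<nu>0)"
  define W where "W \<omega> = (\<Prod>i\<in>I. wts (\<lambda>j. p j \<omega>) (\<sigma> i))" for \<omega>
  define B where "B \<omega> = (\<Prod>A\<in>P1. G A (\<eta> (\<phi> A) \<omega>))" for \<omega>
  have \<nu>0s: "sets \<nu>0 = sets U01" using diffuse_prob[OF \<nu>0] by simp
  have inner: "(\<Prod>i\<in>I. \<integral>\<^sup>+y. g i y \<partial>kap \<nu>0 (\<lambda>j. \<eta> j \<omega>) (\<sigma> i)) = C0 * B \<omega>" if \<omega>: "\<omega> \<in> space M" for \<omega>
  proof -
    have \<eta>01: "\<eta> j \<omega> \<in> {0..1}" for j using measurable_space[OF \<eta>m \<omega>] by simp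
    let ?c = "\<lambda>i. \<integral>\<^sup>+y. g i y \<partial>kap \<nu>0 (\<lambda>j. \<eta> j \<omega>) (\<sigma> i)"
    have c0: "?c i = (\<integral>\<^sup>+y. g i y \<partial>\<nu>0)" if "\<sigma> i = 0" for i using that by (simp add: kap_def)
    have c1: "?c i = g i (\<eta> j \<omega>)" if "\<sigma> i = Suc j" "i \<in> I" for i j
      using that \<eta>01[of j] g[of i] by (simp add: kap_def nn_integral_return U01_def measurable_restrict_space1)
    have "(\<Prod>i\<in>I. ?c i) = (\<Prod>A\<in>P. \<Prod>i\<in>A. ?c i)"
    proof -
      have "\<Union>P = I" using P by (simp add: partition_on_def)
      moreover have "(\<Prod>i\<in>\<Union>P. ?c i) = (\<Prod>A\<in>P. \<Prod>i\<in>A. ?c i)"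
        using prod.Union_disjoint[of P ?c] PI I dis by (auto intro: finite_subset simp: o_def)
      ultimately show ?thesis by simp
    qed
    also have "\<dots> = (\<Prod>A\<in>P0. \<Prod>i\<in>A. ?c i) * (\<Prod>A\<in>P1. \<Prod>i\<in>A. ?c i)"
      unfolding P01(1) using P01 by (intro prod.union_disjoint) auto
    also have "(\<Prod>A\<in>P0. \<Prod>i\<in>A. ?c i) = C0"
      unfolding C0_def
    proof (rule prod.cong[OF refl])
      fix A assume A: "A \<in> P0"
      then have s0: "\<sigma> (rep A) = 0" by (simp add: P0_def)
      obtain r where r: "A = {r}" "rep A = r" using A0[OF A] by blast
      show "(\<Prod>i\<in>A. ?c i) = (\<integral>\<^sup>+x. G A x \<partial>\<nu>0)"
        unfolding r using c0[of r] s0 r(2) by (simp add: G_def)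
    qed
    also have "(\<Prod>A\<in>P1. \<Prod>i\<in>A. ?c i) = B \<omega>"
      unfolding B_def G_def
    proof (rule prod.cong[OF refl])
      fix A assume A: "A \<in> P1"
      then have "A \<subseteq> I" using PI by (auto simp: P1_def)
      then show "(\<Prod>i\<in>A. ?c i) = (\<Prod>i\<in>A. g i (\<eta> (\<phi> A) \<omega>))"
        using A1[OF A] c1 by (intro prod.cong) auto
    qed
    finally show ?thesis .
  qed
  have Wm: "W \<in> borel_measurable M"
  proof -
    have "(\<lambda>\<omega>. \<lambda>j. p j \<omega>) \<in> M \<rightarrow>\<^sub>M PiM UNIV (\<lambda>_. borel)"
      using ind by (simp add: indep_var_distribution_eq)
    then show ?thesis unfolding W_def
      by (intro borel_measurable_prod_ennreal measurable_compose[OF _ wts_meas]) auto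
  qed
  have bm: "(\<lambda>e. \<Prod>A\<in>P1. G A (e (\<phi> A))) \<in> borel_measurable (PiM UNIV (\<lambda>_::nat. U01))"
  proof (intro borel_measurable_prod_ennreal)
    fix A assume "A \<in> P1"
    then have "G A \<in> borel_measurable borel" using Gm by (auto simp: P1_def)
    moreover have "(\<lambda>e. e (\<phi> A)) \<in> borel_measurable (PiM UNIV (\<lambda>_::nat. U01))"
      by (rule comp_borel_PiM) auto
    ultimately show "(\<lambda>e. G A (e (\<phi> A))) \<in> borel_measurable (PiM UNIV (\<lambda>_::nat. U01))"
      using measurable_compose by fastforce
  qed
  have Bm: "B \<in> borel_measurable M"
  proof -
    have "(\<lambda>\<omega>. \<lambda>j. \<eta> j \<omega>) \<in> M \<rightarrow>\<^sub>M PiM UNIV (\<lambda>_. U01)"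
      using ind by (simp add: indep_var_distribution_eq)
    from measurable_compose[OF this bm] show ?thesis unfolding B_def by simp
  qed
  have "(\<integral>\<^sup>+\<omega>. W \<omega> * (\<Prod>i\<in>I. \<integral>\<^sup>+y. g i y \<partial>kap \<nu>0 (\<lambda>j. \<eta> j \<omega>) (\<sigma> i)) \<partial>M) = (\<integral>\<^sup>+\<omega>. C0 * (W \<omega> * B \<omega>) \<partial>M)"
    by (intro nn_integral_cong) (simp add: inner mult_ac)
  also have "\<dots> = C0 * (\<integral>\<^sup>+\<omega>. W \<omega> * B \<omega> \<partial>M)"
    using Wm Bm by (intro nn_integral_cmult) auto
  also have "(\<integral>\<^sup>+\<omega>. W \<omega> * B \<omega> \<partial>M) = (\<integral>\<^sup>+\<omega>. W \<omega> \<partial>M) * (\<integral>\<^sup>+\<omega>. B \<omega> \<partial>M)"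
  proof -
    have "(\<lambda>pv. \<Prod>i\<in>I. wts pv (\<sigma> i)) \<in> borel_measurable (PiM UNIV (\<lambda>_::nat. (borel :: real measure)))"
      by (intro borel_measurable_prod_ennreal wts_meas)
    from indep_var_nn_integral_mult[OF M ind this bm] show ?thesis by (simp add: W_def B_def)
  qed
  also have "(\<integral>\<^sup>+\<omega>. B \<omega> \<partial>M) = (\<Prod>A\<in>P1. \<integral>\<^sup>+x. G A x \<partial>\<nu>0)"
    unfolding B_def using Gm by (intro indep_eta_prod[OF M ind\<eta> \<eta>m \<eta>d P01(4) inj]) (auto simp: P1_def)
  also have "C0 * ((\<integral>\<^sup>+\<omega>. W \<omega> \<partial>M) * (\<Prod>A\<in>P1. \<integral>\<^sup>+x. G A x \<partial>\<nu>0)) = (\<integral>\<^sup>+\<omega>. W \<omega> \<partial>M) * (\<Prod>A\<in>P. \<integral>\<^sup>+x. G A x \<partial>\<nu>0)"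
    unfolding C0_def P01(1) using P01 by (subst prod.union_disjoint) (auto simp: mult_ac)
  finally show ?thesis by (simp add: W_def G_def)
qed

lemma AE_eta_inj:
  fixes \<eta> :: "nat \<Rightarrow> 'a \<Rightarrow> real"
  assumes M: "prob_space M" and ind: "prob_space.indep_vars M (\<lambda>_. U01) \<eta> UNIV"
    and \<eta>m: "\<And>j. \<eta> j \<in> M \<rightarrow>\<^sub>M U01" and \<eta>d: "\<And>j. distr M U01 (\<eta> j) = \<nu>0"
    and \<nu>0: "diffuse_base \<nu>0"
  shows "AE \<omega> in M. inj (\<lambda>j. \<eta> j \<omega>)"
proof -
  interpret prob_space M by fact
  have \<nu>0p: "prob_space \<nu>0" and \<nu>0s: "sets \<nu>0 = sets U01" using diffuse_prob[OF \<nu>0] by auto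
  have pps: "product_prob_space (\<lambda>_::nat. \<nu>0)"
    using \<nu>0p by (auto simp: product_prob_space_def product_prob_space_axioms_def product_sigma_finite_def prob_space_imp_sigma_finite)
  have "AE \<omega> in M. \<eta> j \<omega> \<noteq> \<eta> j' \<omega>" if jj: "j \<noteq> j'" for j j'
  proof -
    define J where "J = {j, j'}"
    have indJ: "indep_vars (\<lambda>_. U01) \<eta> J" using ind by (rule indep_vars_subset) auto
    then have D: "distr M (PiM J (\<lambda>_. U01)) (\<lambda>x. \<lambda>l\<in>J. \<eta> l x) = PiM J (\<lambda>_. \<nu>0)"
      using indep_vars_iff_distr_eq_PiM[where I=J and M'="\<lambda>_. U01" and X=\<eta>] \<eta>m \<eta>d by (simp add: J_def)
    have AEx: "AE x in PiM J (\<lambda>_. \<nu>0). x j \<noteq> x j'"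
      by (rule AE_PiM_diffuse_neq[OF pps]) (use jj \<nu>0s \<nu>0 in \<open>auto simp: J_def diffuse_base_def\<close>)
    have "AE x in distr M (PiM J (\<lambda>_. U01)) (\<lambda>x. \<lambda>l\<in>J. \<eta> l x). x j \<noteq> x j'" unfolding D by (rule AEx)
    from AE_distrD[OF _ this] show ?thesis using \<eta>m by (auto simp: J_def intro!: measurable_restrict)
  qed
  then have "AE \<omega> in M. \<forall>j j'. j \<noteq> j' \<longrightarrow> \<eta> j \<omega> \<noteq> \<eta> j' \<omega>"
    by (simp add: AE_all_countable)
  then show ?thesis by eventually_elim (auto simp: inj_def)
qed

definition Cc :: "'a measure \<Rightarrow> (nat \<Rightarrow> 'a \<Rightarrow> real) \<Rightarrow> 'i set \<Rightarrow> 'i set set \<Rightarrow> ennreal" where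
  "Cc M p I P = (\<integral>\<^sup>+\<sigma>. (if tier I \<sigma> P then \<integral>\<^sup>+\<omega>. (\<Prod>i\<in>I. wts (\<lambda>j. p j \<omega>) (\<sigma> i)) \<partial>M else 0) \<partial>count_space (PiE I (\<lambda>_. UNIV)))"

lemma main_P:
  fixes M :: "'a measure" and \<nu>0 :: "real measure"
    and p \<eta> v :: "nat \<Rightarrow> 'a \<Rightarrow> real" and \<nu> :: "'a \<Rightarrow> real measure" and g :: "nat \<Rightarrow> real \<Rightarrow> ennreal"
  assumes M: "prob_space M" and \<nu>0: "diffuse_base \<nu>0"
    and SS: "species_sampling M \<nu>0 p \<eta> \<nu>" and C: "cond_iid_given_measure M \<nu> v"
    and P: "partition_on {1..k} P"
    and g: "\<And>i. i \<in> {1..k} \<Longrightarrow> g i \<in> borel_measurable borel"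
  shows "(\<integral>\<^sup>+\<omega>. (\<Prod>i\<in>{1..k}. g i (v i \<omega>)) * indicator {\<omega>. tiep {1..k} (\<lambda>i. v i \<omega>) P} \<omega> \<partial>M)
       = Cc M p {1..k} P * (\<Prod>A\<in>P. \<integral>\<^sup>+x. (\<Prod>i\<in>A. g i x) \<partial>\<nu>0)"
proof -
  interpret prob_space M by fact
  define I where "I = {1..k::nat}"
  have I: "finite I" by (simp add: I_def)
  from SS have pm: "\<And>j. p j \<in> borel_measurable M" and \<eta>m: "\<And>j. \<eta> j \<in> M \<rightarrow>\<^sub>M U01"
    and ind\<eta>: "indep_vars (\<lambda>_. U01) \<eta> UNIV" and \<eta>d: "\<And>j. distr M U01 (\<eta> j) = \<nu>0"
    and ind: "indep_var (PiM UNIV (\<lambda>_. borel)) (\<lambda>\<omega> j. p j \<omega>) (PiM UNIV (\<lambda>_. U01)) (\<lambda>\<omega> j. \<eta> j \<omega>)"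
    and aep: "AE \<omega> in M. (\<forall>j. 0 \<le> p j \<omega>) \<and> summable (\<lambda>j. p j \<omega>) \<and> (\<Sum>j. p j \<omega>) \<le> 1"
    and \<nu>m: "\<nu> \<in> M \<rightarrow>\<^sub>M prob_algebra U01"
    and aemix: "AE \<omega> in M. \<forall>B\<in>sets U01. measure (\<nu> \<omega>) B = (\<Sum>j. p j \<omega> * indicator B (\<eta> j \<omega>)) + (1 - (\<Sum>j. p j \<omega>)) * measure \<nu>0 B"
    unfolding species_sampling_def by auto
  have aeinj: "AE \<omega> in M. inj (\<lambda>j. \<eta> j \<omega>)" by (rule AE_eta_inj[OF M ind\<eta> \<eta>m \<eta>d \<nu>0])
  have \<nu>0s: "sets \<nu>0 = sets U01" using diffuse_prob[OF \<nu>0] by simp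
  define H where "H x = (\<Prod>i\<in>I. g i (x i)) * indicator {x. tiep I x P} x" for x :: "nat \<Rightarrow> real"
  have Hm: "H \<in> borel_measurable (PiM I L)" if Ls: "\<And>l. sets (L l) = sets U01" for L :: "nat \<Rightarrow> real measure"
  proof -
    have "(\<lambda>x. \<Prod>i\<in>I. g i (x i)) \<in> borel_measurable (PiM I L)"
    proof (intro borel_measurable_prod_ennreal)
      fix i assume "i \<in> I"
      then show "(\<lambda>x. g i (x i)) \<in> borel_measurable (PiM I L)"
        using measurable_compose[OF comp_borel_PiM[of i I L] g[of i]] Ls by (simp add: I_def)
    qed
    moreover have "Measurable.pred (PiM I L) (\<lambda>x. tiep I x P)" by (rule tiep_pred[OF I]) (simp add: Ls)
    ultimately show ?thesis unfolding H_def
      by (intro borel_measurable_times_ennreal) (auto simp: pred_def indicator_def cong: measurable_cong)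
  qed
  define S where "S = PiE I (\<lambda>_. UNIV :: nat set)"
  define F where "F \<sigma> \<omega> = (\<Prod>i\<in>I. wts (\<lambda>j. p j \<omega>) (\<sigma> i)) *
     (if tier I \<sigma> P then \<Prod>i\<in>I. \<integral>\<^sup>+y. g i y \<partial>kap \<nu>0 (\<lambda>j. \<eta> j \<omega>) (\<sigma> i) else 0)" for \<sigma> \<omega>
  have step1: "(\<integral>\<^sup>+\<omega>. (\<Prod>i\<in>{1..k}. g i (v i \<omega>)) * indicator {\<omega>. tiep {1..k} (\<lambda>i. v i \<omega>) P} \<omega> \<partial>M)
      = (\<integral>\<^sup>+\<omega>. H (\<lambda>i\<in>I. v i \<omega>) \<partial>M)"
    by (intro nn_integral_cong) (auto simp: H_def I_def tiep_def indicator_def intro!: prod.cong)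
  also have "\<dots> = (\<integral>\<^sup>+\<omega>. \<integral>\<^sup>+x. H x \<partial>PiM I (\<lambda>_. \<nu> \<omega>) \<partial>M)"
    unfolding I_def by (rule joint_law[OF M \<nu>m C]) (use Hm[of "\<lambda>_. U01"] in \<open>simp add: I_def\<close>)
  also have "\<dots> = (\<integral>\<^sup>+\<omega>. \<integral>\<^sup>+\<sigma>. F \<sigma> \<omega> \<partial>count_space S \<partial>M)"
  proof (rule nn_integral_cong_AE)
    show "AE \<omega> in M. (\<integral>\<^sup>+x. H x \<partial>PiM I (\<lambda>_. \<nu> \<omega>)) = (\<integral>\<^sup>+\<sigma>. F \<sigma> \<omega> \<partial>count_space S)"
      using aep aemix aeinj AE_space
    proof eventually_elim
      case (elim \<omega>)
      let ?pv = "\<lambda>j. p j \<omega>" and ?e = "\<lambda>j. \<eta> j \<omega>"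
      have e01: "\<And>j. ?e j \<in> {0..1}" using measurable_space[OF \<eta>m elim(4)] by simp
      have \<nu>sp: "\<nu> \<omega> \<in> space (prob_algebra U01)" using measurable_space[OF \<nu>m elim(4)] .
      note mr = mixture_repr[where \<eta>="\<lambda>j. \<eta> j \<omega>" and pv="\<lambda>j. p j \<omega>" and \<mu>="\<nu> \<omega>", OF \<nu>0 e01 _ _ _ \<nu>sp]
      have Wp: "prob_space (density (count_space UNIV) (wts ?pv))" and \<nu>eq: "\<nu> \<omega> = bind (density (count_space UNIV) (wts ?pv)) (kap \<nu>0 ?e)"
        using mr elim(1,2) by auto
      have kp: "prob_space (kap \<nu>0 ?e n)" "sets (kap \<nu>0 ?e n) = sets U01" for n using kap_prob[OF \<nu>0 e01] by auto
      define D where "D = density (count_space S) (\<lambda>\<sigma>. \<Prod>i\<in>I. wts ?pv (\<sigma> i))"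
      define K where "K \<sigma> = PiM I (\<lambda>i. kap \<nu>0 ?e (\<sigma> i))" for \<sigma>
      have PiMeq: "PiM I (\<lambda>_. \<nu> \<omega>) = bind D K"
        unfolding \<nu>eq D_def K_def S_def by (rule PiM_bind_discrete[OF I kp Wp])
      have Kp: "prob_space (K \<sigma>)" for \<sigma> unfolding K_def by (rule prob_space_PiM) (use kp in auto)
      have Ks: "sets (K \<sigma>) = sets (PiM I (\<lambda>_. U01))" for \<sigma> unfolding K_def by (rule sets_PiM_cong) (use kp in auto)
      have Km: "K \<in> D \<rightarrow>\<^sub>M subprob_algebra (PiM I (\<lambda>_. U01))"
        unfolding D_def
        by (subst measurable_cong_sets[OF sets_density refl])
           (auto simp: measurable_count_space_eq1 space_subprob_algebra Kp Ks prob_space_imp_subprob_space)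
      have "(\<integral>\<^sup>+x. H x \<partial>PiM I (\<lambda>_. \<nu> \<omega>)) = (\<integral>\<^sup>+\<sigma>. \<integral>\<^sup>+x. H x \<partial>K \<sigma> \<partial>D)"
        unfolding PiMeq by (rule nn_integral_bind[OF Hm[of "\<lambda>_. U01"] Km]) simp
      also have "\<dots> = (\<integral>\<^sup>+\<sigma>. (\<Prod>i\<in>I. wts ?pv (\<sigma> i)) * \<integral>\<^sup>+x. H x \<partial>K \<sigma> \<partial>count_space S)"
        unfolding D_def by (rule nn_integral_density) auto
      also have "\<dots> = (\<integral>\<^sup>+\<sigma>. F \<sigma> \<omega> \<partial>count_space S)"
      proof (rule nn_integral_cong)
        fix \<sigma>
        have "(\<integral>\<^sup>+x. H x \<partial>K \<sigma>) = (if tier I \<sigma> P then \<Prod>i\<in>I. \<integral>\<^sup>+y. g i y \<partial>kap \<nu>0 ?e (\<sigma> i) else 0)"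
          unfolding H_def K_def by (rule integral_tie[OF \<nu>0 e01 elim(3) I]) (auto simp: g I_def)
        then show "(\<Prod>i\<in>I. wts ?pv (\<sigma> i)) * (\<integral>\<^sup>+x. H x \<partial>K \<sigma>) = F \<sigma> \<omega>" by (simp add: F_def)
      qed
      finally show ?case .
    qed
  qed
  also have "\<dots> = (\<integral>\<^sup>+\<sigma>. \<integral>\<^sup>+\<omega>. F \<sigma> \<omega> \<partial>M \<partial>count_space S)"
  proof (rule pair_sigma_finite.Fubini')
    have cS: "countable S" unfolding S_def by (rule countable_PiE) (auto simp: I)
    show "pair_sigma_finite (count_space S) M"
      using cS by (auto simp: pair_sigma_finite_def sigma_finite_measure_count_space_countable prob_space_imp_sigma_finite M)
    have pvm: "(\<lambda>\<omega>. \<lambda>j. p j \<omega>) \<in> M \<rightarrow>\<^sub>M PiM UNIV (\<lambda>_. borel)"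
      using ind by (simp add: indep_var_distribution_eq)
    have Fm: "F \<sigma> \<in> borel_measurable M" for \<sigma>
    proof -
      have W: "(\<lambda>\<omega>. \<Prod>i\<in>I. wts (\<lambda>j. p j \<omega>) (\<sigma> i)) \<in> borel_measurable M"
        using pvm by (intro borel_measurable_prod_ennreal measurable_compose[OF _ wts_meas]) auto
      have c: "(\<lambda>\<omega>. \<integral>\<^sup>+y. g i y \<partial>kap \<nu>0 (\<lambda>j. \<eta> j \<omega>) (\<sigma> i)) \<in> borel_measurable M" if "i \<in> I" for i
      proof (cases "\<sigma> i")
        case 0 then show ?thesis by (simp add: kap_def)
      next
        case (Suc j)
        have gU: "g i \<in> borel_measurable U01" using g[of i] that by (simp add: I_def U01_def measurable_restrict_space1)
        have "(\<lambda>\<omega>. g i (\<eta> j \<omega>)) \<in> borel_measurable M"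
          using measurable_compose[OF \<eta>m gU] .
        moreover have "w \<in> space M \<Longrightarrow> (\<integral>\<^sup>+y. g i y \<partial>kap \<nu>0 (\<lambda>j. \<eta> j w) (\<sigma> i)) = g i (\<eta> j w)" for w
          using Suc measurable_space[OF \<eta>m, of w j] gU by (simp add: kap_def nn_integral_return)
        ultimately show ?thesis by (subst measurable_cong) auto
      qed
      show ?thesis unfolding F_def using W c by (auto intro!: borel_measurable_prod_ennreal borel_measurable_times_ennreal)
    qed
    show "(\<lambda>(\<sigma>, \<omega>). F \<sigma> \<omega>) \<in> borel_measurable (count_space S \<Otimes>\<^sub>M M)"
      by (rule measurable_pair_measure_countable1[OF cS]) (simp add: Fm)
  qed
  also have "\<dots> = (\<integral>\<^sup>+\<sigma>. (if tier I \<sigma> P then \<integral>\<^sup>+\<omega>. (\<Prod>i\<in>I. wts (\<lambda>j. p j \<omega>) (\<sigma> i)) \<partial>M else 0)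
        * (\<Prod>A\<in>P. \<integral>\<^sup>+x. (\<Prod>i\<in>A. g i x) \<partial>\<nu>0) \<partial>count_space S)"
  proof (rule nn_integral_cong)
    fix \<sigma>
    show "(\<integral>\<^sup>+\<omega>. F \<sigma> \<omega> \<partial>M) = (if tier I \<sigma> P then \<integral>\<^sup>+\<omega>. (\<Prod>i\<in>I. wts (\<lambda>j. p j \<omega>) (\<sigma> i)) \<partial>M else 0)
        * (\<Prod>A\<in>P. \<integral>\<^sup>+x. (\<Prod>i\<in>A. g i x) \<partial>\<nu>0)"
    proof (cases "tier I \<sigma> P")
      case True
      show ?thesis using True
        unfolding F_def by (simp add: factor_sigma[OF M ind ind\<eta> \<eta>m \<eta>d \<nu>0 I P[folded I_def] True g[unfolded I_def[symmetric]]])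
    qed (simp add: F_def)
  qed
  also have "\<dots> = Cc M p {1..k} P * (\<Prod>A\<in>P. \<integral>\<^sup>+x. (\<Prod>i\<in>A. g i x) \<partial>\<nu>0)"
    unfolding Cc_def S_def I_def by (rule nn_integral_multc) simp
  finally show ?thesis .
qed

lemma stick_prod:
  fixes u :: "nat \<Rightarrow> 'a \<Rightarrow> real"
  assumes L: "finite L" and dd: "\<And>l. l \<in> L \<Longrightarrow> 1 \<le> dd l \<and> dd l \<le> k"
  shows "(\<Prod>l\<in>L. stick_weights u \<omega> (dd l))
       = (\<Prod>i\<in>{1..k}. u i \<omega> ^ card {l\<in>L. dd l = i} * (1 - u i \<omega>) ^ card {l\<in>L. dd l > i})"
proof -
  define I where "I = {1..k}"
  have I: "finite I" by (simp add: I_def)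
  have "(\<Prod>l\<in>L. stick_weights u \<omega> (dd l)) = (\<Prod>l\<in>L. u (dd l) \<omega> * (\<Prod>i\<in>{1..<dd l}. (1 - u i \<omega>)))"
  proof (rule prod.cong[OF refl])
    fix l assume "l \<in> L"
    then have "dd l \<noteq> 0" using dd[of l] by auto
    then show "stick_weights u \<omega> (dd l) = u (dd l) \<omega> * (\<Prod>i\<in>{1..<dd l}. (1 - u i \<omega>))"
      by (simp add: stick_weights_def)
  qed
  also have "\<dots> = (\<Prod>l\<in>L. u (dd l) \<omega>) * (\<Prod>l\<in>L. \<Prod>i\<in>{1..<dd l}. (1 - u i \<omega>))"
    by (rule prod.distrib)
  also have "(\<Prod>l\<in>L. u (dd l) \<omega>) = (\<Prod>i\<in>I. u i \<omega> ^ card {l\<in>L. dd l = i})"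
  proof -
    have "(\<Prod>l\<in>L. u (dd l) \<omega>) = (\<Prod>i\<in>I. \<Prod>l\<in>{l\<in>L. dd l = i}. u (dd l) \<omega>)"
      using dd L I by (intro prod.group[symmetric]) (auto simp: I_def)
    also have "\<dots> = (\<Prod>i\<in>I. u i \<omega> ^ card {l\<in>L. dd l = i})"
    proof (rule prod.cong[OF refl])
      fix i assume "i \<in> I"
      have "(\<Prod>l\<in>{l\<in>L. dd l = i}. u (dd l) \<omega>) = (\<Prod>l\<in>{l\<in>L. dd l = i}. u i \<omega>)"
        by (rule prod.cong) auto
      then show "(\<Prod>l\<in>{l\<in>L. dd l = i}. u (dd l) \<omega>) = u i \<omega> ^ card {l\<in>L. dd l = i}"
        by (simp add: prod_constant)
    qed
    finally show ?thesis .
  qed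
  also have "(\<Prod>l\<in>L. \<Prod>i\<in>{1..<dd l}. (1 - u i \<omega>)) = (\<Prod>i\<in>I. (1 - u i \<omega>) ^ card {l\<in>L. dd l > i})"
  proof -
    have "(\<Prod>l\<in>L. \<Prod>i\<in>{1..<dd l}. (1 - u i \<omega>)) = (\<Prod>l\<in>L. \<Prod>i\<in>I. if i < dd l then 1 - u i \<omega> else 1)"
    proof (rule prod.cong[OF refl])
      fix l assume l: "l \<in> L"
      have "{1..<dd l} = {i\<in>I. i < dd l}" using dd[OF l] by (auto simp: I_def)
      then show "(\<Prod>i\<in>{1..<dd l}. (1 - u i \<omega>)) = (\<Prod>i\<in>I. if i < dd l then 1 - u i \<omega> else 1)"
        using I by (simp add: prod.inter_filter)
    qed
    also have "\<dots> = (\<Prod>i\<in>I. \<Prod>l\<in>L. if i < dd l then 1 - u i \<omega> else 1)"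
      by (rule prod.swap)
    also have "\<dots> = (\<Prod>i\<in>I. (1 - u i \<omega>) ^ card {l\<in>L. dd l > i})"
      using L by (intro prod.cong refl) (simp add: prod.inter_filter[symmetric] prod_constant)
    finally show ?thesis .
  qed
  finally show ?thesis by (simp add: I_def prod.distrib)
qed

theorem theorem4:
  fixes M :: "'a measure" and \<nu>0 :: "real measure"
    and p \<eta> v :: "nat \<Rightarrow> 'a \<Rightarrow> real" and \<nu> :: "'a \<Rightarrow> real measure"
    and \<pi> :: "nat multiset \<Rightarrow> real" and d :: "nat \<Rightarrow> 'a \<Rightarrow> nat"
    and n :: nat and dd :: "nat \<Rightarrow> nat"
  assumes "prob_space M"
    and "diffuse_base \<nu>0"
    and "species_sampling M \<nu>0 p \<eta> \<nu>"
    and "cond_iid_given_measure M \<nu> v"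
    and "is_EPPF M v \<pi>"
    and "cond_iid_given_weights M (stick_weights v) d"
    and "n \<ge> 1"
    and "\<forall>l\<in>{1..n}. dd l \<ge> 1"
  shows "measure M {\<omega>\<in>space M. \<forall>l\<in>{1..n}. d l \<omega> = dd l}
    = (\<Sum>P | partition_on {1..Max (dd ` {1..n})} P.
         \<pi> (image_mset card (mset_set P)) *
         (\<Prod>A\<in>P. \<integral>x. x ^ (\<Sum>i\<in>A. card {l\<in>{1..n}. dd l = i})
                       * (1 - x) ^ (\<Sum>i\<in>A. card {l\<in>{1..n}. dd l > i}) \<partial>\<nu>0))"
proof -
  note M = assms(1) and \<nu>0 = assms(2) and SS = assms(3) and C = assms(4) and EP = assms(5) and CW = assms(6)
  interpret prob_space M by fact
  define k where "k = Max (dd ` {1..n})"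
  define I where "I = {1..k}"
  define r where "r i = card {l\<in>{1..n}. dd l = i}" for i
  define t where "t i = card {l\<in>{1..n}. dd l > i}" for i
  define f where "f i x = x ^ r i * (1 - x) ^ t i" for i and x :: real
  define g where "g i x = ennreal (f i x)" for i x
  have ddk: "1 \<le> dd l \<and> dd l \<le> k" if "l \<in> {1..n}" for l
    using assms(8) that by (auto simp: k_def intro!: Max_ge)
  have k1: "1 \<le> k" using ddk[of 1] assms(7) by auto
  have I: "finite I" by (simp add: I_def)
  have vm: "\<And>i. i \<in> I \<Longrightarrow> v i \<in> M \<rightarrow>\<^sub>M U01" using C by (auto simp: cond_iid_given_measure_def I_def)
  have idb: "(\<lambda>x. x) \<in> U01 \<rightarrow>\<^sub>M (borel :: real measure)" by (simp add: U01_def measurable_restrict_space1)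
  have vb: "\<And>i. i \<in> I \<Longrightarrow> v i \<in> borel_measurable M"
    using measurable_compose[OF vm idb] by simp
  have v01: "v i \<omega> \<in> {0..1}" if "\<omega> \<in> space M" "i \<in> I" for \<omega> i
    using measurable_space[OF vm[OF that(2)] that(1)] by simp
  have f01: "0 \<le> f i x \<and> f i x \<le> 1" if "x \<in> {0..1}" for i x
    using that by (auto simp: f_def intro!: mult_le_one power_le_one)
  have fm: "f i \<in> borel_measurable borel" for i unfolding f_def by measurable
  have gm: "g i \<in> borel_measurable borel" for i unfolding g_def using fm by measurable
  have \<nu>0p: "prob_space \<nu>0" and \<nu>0s: "sets \<nu>0 = sets U01" using diffuse_prob[OF \<nu>0] by auto
  interpret N0: prob_space \<nu>0 by fact
  have sp\<nu>0: "space \<nu>0 = {0..1}" using sets_eq_imp_space_eq[OF \<nu>0s] by simp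
  have LHS: "measure M {\<omega>\<in>space M. \<forall>l\<in>{1..n}. d l \<omega> = dd l} = (\<integral>\<omega>. (\<Prod>i\<in>I. f i (v i \<omega>)) \<partial>M)"
  proof -
    have "measure M (space M \<inter> {\<omega>\<in>space M. \<forall>l\<in>{1..n}. d l \<omega> = dd l})
        = (\<integral>\<omega>. indicator (space M) \<omega> * (\<Prod>l\<in>{1..n}. stick_weights v \<omega> (dd l)) \<partial>M)"
    proof -
      have cw: "\<And>m A (j :: nat \<Rightarrow> nat). A \<in> sets (vimage_algebra (space M) (stick_weights v) (Pi\<^sub>M UNIV (\<lambda>_. borel))) \<Longrightarrow>
        measure M (A \<inter> {\<omega>\<in>space M. \<forall>i\<in>{1..m}. d i \<omega> = j i})
        = (\<integral>\<omega>. indicator A \<omega> * (\<Prod>i\<in>{1..m}. stick_weights v \<omega> (j i)) \<partial>M)"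
        using CW unfolding cond_iid_given_weights_def by blast
      show ?thesis by (rule cw) (metis sets.top space_vimage_algebra)
    qed
    also have "\<dots> = (\<integral>\<omega>. (\<Prod>i\<in>I. f i (v i \<omega>)) \<partial>M)"
    proof (rule Bochner_Integration.integral_cong[OF refl])
      fix \<omega> assume "\<omega> \<in> space M"
      then have "indicator (space M) \<omega> * (\<Prod>l\<in>{1..n}. stick_weights v \<omega> (dd l)) = (\<Prod>l\<in>{1..n}. stick_weights v \<omega> (dd l))"
        by simp
      also have "\<dots> = (\<Prod>i\<in>{1..k}. v i \<omega> ^ card {l\<in>{1..n}. dd l = i} * (1 - v i \<omega>) ^ card {l\<in>{1..n}. dd l > i})"
        by (rule stick_prod) (use ddk in auto)
      also have "\<dots> = (\<Prod>i\<in>I. f i (v i \<omega>))"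
        unfolding I_def f_def r_def t_def ..
      finally show "indicator (space M) \<omega> * (\<Prod>l\<in>{1..n}. stick_weights v \<omega> (dd l)) = (\<Prod>i\<in>I. f i (v i \<omega>))" .
    qed
    finally have X: "measure M (space M \<inter> {\<omega>\<in>space M. \<forall>l\<in>{1..n}. d l \<omega> = dd l}) = (\<integral>\<omega>. (\<Prod>i\<in>I. f i (v i \<omega>)) \<partial>M)" .
    have "space M \<inter> {\<omega>\<in>space M. \<forall>l\<in>{1..n}. d l \<omega> = dd l} = {\<omega>\<in>space M. \<forall>l\<in>{1..n}. d l \<omega> = dd l}"
      by blast
    with X show ?thesis by simp
  qed
  have fvm: "(\<lambda>\<omega>. f i (v i \<omega>)) \<in> borel_measurable M" if "i \<in> I" for i
    using measurable_compose[OF vb[OF that] fm[of i]] .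
  have Fm: "(\<lambda>\<omega>. \<Prod>i\<in>I. f i (v i \<omega>)) \<in> borel_measurable M"
    using fvm by (rule borel_measurable_prod)
  have F01: "0 \<le> (\<Prod>i\<in>I. f i (v i \<omega>)) \<and> (\<Prod>i\<in>I. f i (v i \<omega>)) \<le> 1" if "\<omega> \<in> space M" for \<omega>
  proof -
    have "\<And>i. i \<in> I \<Longrightarrow> 0 \<le> f i (v i \<omega>) \<and> f i (v i \<omega>) \<le> 1" using f01 v01[OF that] by blast
    then show ?thesis by (intro conjI prod_nonneg prod_le_1) auto
  qed
  have C1: "ennreal (\<integral>\<omega>. (\<Prod>i\<in>I. f i (v i \<omega>)) \<partial>M) = (\<integral>\<^sup>+\<omega>. (\<Prod>i\<in>I. g i (v i \<omega>)) \<partial>M)"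
  proof -
    have "ennreal (\<integral>\<omega>. (\<Prod>i\<in>I. f i (v i \<omega>)) \<partial>M) = (\<integral>\<^sup>+\<omega>. ennreal (\<Prod>i\<in>I. f i (v i \<omega>)) \<partial>M)"
    proof (rule nn_integral_eq_integral[symmetric])
      show "integrable M (\<lambda>\<omega>. \<Prod>i\<in>I. f i (v i \<omega>))"
        by (rule integrable_const_bound[where B=1, OF AE_I2 Fm]) (use F01 in auto)
      show "AE \<omega> in M. 0 \<le> (\<Prod>i\<in>I. f i (v i \<omega>))" by (rule AE_I2) (use F01 in auto)
    qed
    also have "\<dots> = (\<integral>\<^sup>+\<omega>. (\<Prod>i\<in>I. g i (v i \<omega>)) \<partial>M)"
    proof (rule nn_integral_cong)
      fix \<omega> assume w: "\<omega> \<in> space M"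
      have "\<And>i. i \<in> I \<Longrightarrow> 0 \<le> f i (v i \<omega>)" using f01 v01[OF w] by blast
      then show "ennreal (\<Prod>i\<in>I. f i (v i \<omega>)) = (\<Prod>i\<in>I. g i (v i \<omega>))"
        unfolding g_def by (rule prod_ennreal[symmetric])
    qed
    finally show ?thesis .
  qed
  have Tm: "{\<omega>\<in>space M. tiep I (\<lambda>i. v i \<omega>) P} \<in> sets M" for P
  proof -
    have "Measurable.pred M (\<lambda>\<omega>. tiep I (\<lambda>i. v i \<omega>) P)"
      unfolding tiep_def
    proof (intro pred_intros_finite[OF I] pred_intros_logic)
      fix i j assume "i \<in> I" "j \<in> I"
      then show "Measurable.pred M (\<lambda>\<omega>. v i \<omega> = v j \<omega>)"
        unfolding pred_def using vb by (intro borel_measurable_eq) auto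
    qed auto
    then show ?thesis by (simp add: pred_def)
  qed
  have parts: "finite {P. partition_on I P}" using I by (rule finitely_many_partition_on)
  have D: "(\<integral>\<^sup>+\<omega>. (\<Prod>i\<in>I. g i (v i \<omega>)) \<partial>M)
      = (\<Sum>P | partition_on I P. \<integral>\<^sup>+\<omega>. (\<Prod>i\<in>I. g i (v i \<omega>)) * indicator {\<omega>. tiep I (\<lambda>i. v i \<omega>) P} \<omega> \<partial>M)"
  proof -
    have "(\<integral>\<^sup>+\<omega>. (\<Prod>i\<in>I. g i (v i \<omega>)) \<partial>M)
        = (\<integral>\<^sup>+\<omega>. (\<Sum>P | partition_on I P. (\<Prod>i\<in>I. g i (v i \<omega>)) * indicator {\<omega>. tiep I (\<lambda>i. v i \<omega>) P} \<omega>) \<partial>M)"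
    proof (rule nn_integral_cong)
      fix \<omega>
      have "(\<Sum>P | partition_on I P. (\<Prod>i\<in>I. g i (v i \<omega>)) * indicator {\<omega>. tiep I (\<lambda>i. v i \<omega>) P} \<omega>)
          = (\<Prod>i\<in>I. g i (v i \<omega>)) * (\<Sum>P | partition_on I P. (if tiep I (\<lambda>i. v i \<omega>) P then 1 else 0))"
        by (simp add: sum_distrib_left indicator_def of_bool_def)
      also have "\<dots> = (\<Prod>i\<in>I. g i (v i \<omega>))" unfolding sum_tiep_indicator[OF I, of "\<lambda>i. v i \<omega>"] by simp
      finally show "(\<Prod>i\<in>I. g i (v i \<omega>)) = (\<Sum>P | partition_on I P. (\<Prod>i\<in>I. g i (v i \<omega>)) * indicator {\<omega>. tiep I (\<lambda>i. v i \<omega>) P} \<omega>)" ..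
    qed
    also have "\<dots> = (\<Sum>P | partition_on I P. \<integral>\<^sup>+\<omega>. (\<Prod>i\<in>I. g i (v i \<omega>)) * indicator {\<omega>. tiep I (\<lambda>i. v i \<omega>) P} \<omega> \<partial>M)"
    proof (rule nn_integral_sum)
      fix P
      have "(\<lambda>\<omega>. \<Prod>i\<in>I. g i (v i \<omega>)) \<in> borel_measurable M"
        using vb gm by (intro borel_measurable_prod_ennreal) (auto intro: measurable_compose)
      moreover have "(\<lambda>\<omega>. indicator {\<omega>. tiep I (\<lambda>i. v i \<omega>) P} \<omega> :: ennreal) \<in> borel_measurable M"
        using Tm[of P] by (subst measurable_cong[where g="indicator {\<omega>\<in>space M. tiep I (\<lambda>i. v i \<omega>) P}"]) (auto simp: indicator_def)
      ultimately show "(\<lambda>\<omega>. (\<Prod>i\<in>I. g i (v i \<omega>)) * indicator {\<omega>. tiep I (\<lambda>i. v i \<omega>) P} \<omega>) \<in> borel_measurable M"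
        by (rule borel_measurable_times_ennreal)
    qed
    finally show ?thesis .
  qed
  have CcP: "Cc M p I P = ennreal (\<pi> (image_mset card (mset_set P)))" if P: "partition_on I P" for P
  proof -
    have "(\<integral>\<^sup>+\<omega>. (\<Prod>i\<in>{1..k}. (\<lambda>_ _. 1::ennreal) i (v i \<omega>)) * indicator {\<omega>. tiep {1..k} (\<lambda>i. v i \<omega>) P} \<omega> \<partial>M)
        = Cc M p {1..k} P * (\<Prod>A\<in>P. \<integral>\<^sup>+x. (\<Prod>i\<in>A. (\<lambda>_ _. 1::ennreal) i x) \<partial>\<nu>0)"
      by (rule main_P[OF M \<nu>0 SS C P[unfolded I_def]]) simp
    then have "emeasure M ({\<omega>. tiep I (\<lambda>i. v i \<omega>) P} \<inter> space M) = Cc M p I P"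
      using Tm[of P] by (simp add: I_def nn_integral_indicator' N0.emeasure_space_1 Int_commute)
    moreover have "{\<omega>. tiep I (\<lambda>i. v i \<omega>) P} \<inter> space M = {\<omega>\<in>space M. \<forall>i\<in>{1..k}. \<forall>j\<in>{1..k}.
                      (v i \<omega> = v j \<omega>) \<longleftrightarrow> (\<exists>A\<in>P. i \<in> A \<and> j \<in> A)}"
      by (auto simp: tiep_def I_def)
    moreover have "measure M {\<omega>\<in>space M. \<forall>i\<in>{1..k}. \<forall>j\<in>{1..k}.
                      (v i \<omega> = v j \<omega>) \<longleftrightarrow> (\<exists>A\<in>P. i \<in> A \<and> j \<in> A)} = \<pi> (image_mset card (mset_set P))"
      using EP k1 P by (auto simp: is_EPPF_def I_def)
    ultimately show ?thesis by (simp add: emeasure_eq_measure)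
  qed
  have \<pi>nn: "0 \<le> \<pi> (image_mset card (mset_set P))" if P: "partition_on I P" for P
  proof -
    have e: "measure M {\<omega>\<in>space M. \<forall>i\<in>{1..k}. \<forall>j\<in>{1..k}.
                      (v i \<omega> = v j \<omega>) \<longleftrightarrow> (\<exists>A\<in>P. i \<in> A \<and> j \<in> A)} = \<pi> (image_mset card (mset_set P))"
      using EP k1 P by (auto simp: is_EPPF_def I_def)
    show ?thesis unfolding e[symmetric] by (rule measure_nonneg)
  qed
  define Q where "Q A = (\<integral>x. x ^ (\<Sum>i\<in>A. r i) * (1 - x) ^ (\<Sum>i\<in>A. t i) \<partial>\<nu>0)" for A
  have Qnn: "0 \<le> Q A" for A unfolding Q_def
    by (intro integral_nonneg_AE AE_I2) (auto simp: sp\<nu>0)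
  have GQ: "(\<integral>\<^sup>+x. (\<Prod>i\<in>A. g i x) \<partial>\<nu>0) = ennreal (Q A)" if A: "finite A" for A
  proof -
    have fm': "(\<lambda>x. x ^ (\<Sum>i\<in>A. r i) * (1 - x) ^ (\<Sum>i\<in>A. t i)) \<in> borel_measurable \<nu>0"
      by (subst measurable_cong_sets[OF \<nu>0s refl]) (simp add: U01_def measurable_restrict_space1)
    have "(\<integral>\<^sup>+x. (\<Prod>i\<in>A. g i x) \<partial>\<nu>0) = (\<integral>\<^sup>+x. ennreal (x ^ (\<Sum>i\<in>A. r i) * (1 - x) ^ (\<Sum>i\<in>A. t i)) \<partial>\<nu>0)"
    proof (rule nn_integral_cong)
      fix x assume x: "x \<in> space \<nu>0"
      then have "(\<Prod>i\<in>A. g i x) = ennreal (\<Prod>i\<in>A. f i x)"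
        using f01 by (auto simp: g_def sp\<nu>0 prod_ennreal)
      also have "(\<Prod>i\<in>A. f i x) = x ^ (\<Sum>i\<in>A. r i) * (1 - x) ^ (\<Sum>i\<in>A. t i)"
        by (simp add: f_def prod.distrib power_sum)
      finally show "(\<Prod>i\<in>A. g i x) = ennreal (x ^ (\<Sum>i\<in>A. r i) * (1 - x) ^ (\<Sum>i\<in>A. t i))" .
    qed
    also have "\<dots> = ennreal (Q A)" unfolding Q_def
    proof (rule nn_integral_eq_integral)
      have "norm (x ^ (\<Sum>i\<in>A. r i) * (1 - x) ^ (\<Sum>i\<in>A. t i)) \<le> 1" if "x \<in> space \<nu>0" for x
        using that by (auto simp: sp\<nu>0 abs_mult power_abs intro!: mult_le_one power_le_one)
      then show "integrable \<nu>0 (\<lambda>x. x ^ (\<Sum>i\<in>A. r i) * (1 - x) ^ (\<Sum>i\<in>A. t i))"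
        using fm' by (intro N0.integrable_const_bound[where B=1] AE_I2) auto
      show "AE x in \<nu>0. 0 \<le> x ^ (\<Sum>i\<in>A. r i) * (1 - x) ^ (\<Sum>i\<in>A. t i)"
        by (intro AE_I2) (auto simp: sp\<nu>0)
    qed
    finally show ?thesis .
  qed
  have E1: "ennreal (measure M {\<omega>\<in>space M. \<forall>l\<in>{1..n}. d l \<omega> = dd l})
        = (\<Sum>P | partition_on I P. \<integral>\<^sup>+\<omega>. (\<Prod>i\<in>I. g i (v i \<omega>)) * indicator {\<omega>. tiep I (\<lambda>i. v i \<omega>) P} \<omega> \<partial>M)"
    unfolding LHS C1 D by (rule refl)
  also have "\<dots> = (\<Sum>P | partition_on I P. ennreal (\<pi> (image_mset card (mset_set P)) * (\<Prod>A\<in>P. Q A)))"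
  proof (rule sum.cong[OF refl])
    fix P assume "P \<in> {P. partition_on I P}"
    then have P: "partition_on I P" by simp
    have finA: "A \<in> P \<Longrightarrow> finite A" for A using P I by (auto simp: partition_on_def intro: finite_subset)
    have "(\<integral>\<^sup>+\<omega>. (\<Prod>i\<in>I. g i (v i \<omega>)) * indicator {\<omega>. tiep I (\<lambda>i. v i \<omega>) P} \<omega> \<partial>M)
        = Cc M p I P * (\<Prod>A\<in>P. \<integral>\<^sup>+x. (\<Prod>i\<in>A. g i x) \<partial>\<nu>0)"
      unfolding I_def by (rule main_P[OF M \<nu>0 SS C P[unfolded I_def]]) (simp add: gm)
    also have "(\<Prod>A\<in>P. \<integral>\<^sup>+x. (\<Prod>i\<in>A. g i x) \<partial>\<nu>0) = (\<Prod>A\<in>P. ennreal (Q A))"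
      by (rule prod.cong[OF refl]) (rule GQ[OF finA])
    also have "(\<Prod>A\<in>P. ennreal (Q A)) = ennreal (\<Prod>A\<in>P. Q A)"
      by (rule prod_ennreal) (rule Qnn)
    also have "Cc M p I P * ennreal (\<Prod>A\<in>P. Q A) = ennreal (\<pi> (image_mset card (mset_set P)) * (\<Prod>A\<in>P. Q A))"
      unfolding CcP[OF P] by (rule ennreal_mult[symmetric]) (auto intro: \<pi>nn[OF P] prod_nonneg Qnn)
    finally show "(\<integral>\<^sup>+\<omega>. (\<Prod>i\<in>I. g i (v i \<omega>)) * indicator {\<omega>. tiep I (\<lambda>i. v i \<omega>) P} \<omega> \<partial>M)
          = ennreal (\<pi> (image_mset card (mset_set P)) * (\<Prod>A\<in>P. Q A))" .
  qed
  also have "\<dots> = ennreal (\<Sum>P | partition_on I P. \<pi> (image_mset card (mset_set P)) * (\<Prod>A\<in>P. Q A))"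
    by (rule sum_ennreal) (auto intro!: mult_nonneg_nonneg prod_nonneg \<pi>nn Qnn)
  finally have E: "ennreal (measure M {\<omega>\<in>space M. \<forall>l\<in>{1..n}. d l \<omega> = dd l})
      = ennreal (\<Sum>P | partition_on I P. \<pi> (image_mset card (mset_set P)) * (\<Prod>A\<in>P. Q A))" .
  have nn: "0 \<le> (\<Sum>P | partition_on I P. \<pi> (image_mset card (mset_set P)) * (\<Prod>A\<in>P. Q A))"
    by (rule sum_nonneg) (auto intro!: mult_nonneg_nonneg prod_nonneg \<pi>nn Qnn)
  have R: "measure M {\<omega>\<in>space M. \<forall>l\<in>{1..n}. d l \<omega> = dd l}
      = (\<Sum>P | partition_on I P. \<pi> (image_mset card (mset_set P)) * (\<Prod>A\<in>P. Q A))"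
    using ennreal_inj[THEN iffD1, OF measure_nonneg nn E] .
  show ?thesis using R unfolding I_def k_def Q_def r_def t_def .
qed

end
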